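(* Let $\mathcal{Q}$ be an exponential family (sufficient statistic $\Gamma:\mathcal{X}\to\mathcal{H}$, log-partition $A$) and let $\pi=q^\pi_{\theta_\pi}$ satisfy the linearly extended recoverability condition (LERC) with respect to $\mathcal{Q}$, with linear operator $L_\pi:\mathcal{H}\to\mathcal{H}_\pi$. (i) Suppose $\operatorname{int}\operatorname{dom}A\neq\emptyset$, $\mathcal{Q}$ is minimal and steep, and $C\subset\mathcal{H}$ is closed and convex with $C\cap\operatorname{int}\operatorname{dom}A^*\neq\emptyset$. If $C$ is compact, then the problem $\min_{\omega\in C\cap\operatorname{dom}A^*}f^D_\pi(\omega)$ has a unique solution $\omega_*$, and $\omega_*\in C\cap\operatorname{int}\operatorname{dom}A^*$. Alternatively, if $L_\pi^\top\theta_\pi\in\operatorname{int}\operatorname{dom}A$, then the same conclusion holds and moreover $\omega_*=\mathrm{proj}^{A^*}_C(\nabla A(L_\pi^\top\theta_\pi))$. (ii) If $\operatorname{int}\operatorname{dom}A\neq\emptyset$ and $\mathcal{Q}$ is minimal and steep, then $f^D_\pi$ is $1$-strongly convex and $1$-smooth relative to $A^*$, i.e. $d_{f^D_\pi}(\omega,\omega')=d_{A^*}(\omega,\omega')$ bounds hold with constant $1$ on both sides for all $\omega,\omega'\in\operatorname{int}\operatorname{dom}A^*$.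
   Context: An exponential family with sufficient statistic $\Gamma:\mathcal{X}\to\mathcal{H}$ ($\mathcal{H}$ finite-dimensional real Hilbert, $\nu$ a reference measure) consists of densities $q_\theta(x)=\exp(\langle\theta,\Gamma(x)\rangle-A(\theta))$, $\theta\in\operatorname{dom}A$, with $A(\theta)=\log\int\exp(\langle\theta,\Gamma(x)\rangle)\nu(dx)$. Minimal: no nonzero $\theta$ with $\langle\theta,\Gamma\rangle$ constant $\nu$-a.e. Steep: $A$ differentiable on $\operatorname{int}\operatorname{dom}A$ with $\|\nabla A(\theta_t)\|\to\infty$ along sequences in $\operatorname{int}\operatorname{dom}A$ tending to the boundary of $\operatorname{dom}A$. $A^*$ is the convex conjugate of $A$; $\nabla A$ is a bijection from $\operatorname{int}\operatorname{dom}A$ onto $\operatorname{int}\operatorname{dom}A^*$ with inverse $\nabla A^*$; $q_\omega$ denotes the member of $\mathcal{Q}$ with expectation parameter $\omega=\mathbb{E}_{q_\omega}[\Gamma(X)]$. $f^D_\pi(\omega)=\mathrm{KL}(q_\omega,\pi)$ for $\omega\in\operatorname{dom}A^*$. LERC: $\pi$ belongs to an exponential family $\mathcal{Q}_\pi$ with sufficient statistic $\Gamma_\pi:\mathcal{X}\to\mathcal{H}_\pi$ and natural parameter $\theta_\pi$, and there is a linear $L_\pi:\mathcal{H}\to\mathcal{H}_\pi$ with $\mathbb{E}_{q_\omega}[\Gamma_\pi(X)]=L_\pi\mathbb{E}_{q_\omega}[\Gamma(X)]$ for all $\omega\in\operatorname{dom}A^*$. Bregman divergence $d_h(\omega,\omega')=h(\omega)-h(\omega')-\langle\nabla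 h(\omega'),\omega-\omega'\rangle$; $f$ is $m$-strongly convex (resp. $\ell$-smooth) relative to $h$ if $m\,d_h\le d_f$ (resp. $d_f\le\ell\, d_h$). $\mathrm{proj}^{A^*}_C(\omega)=\arg\min_{\omega'\in C}d_{A^*}(\omega',\omega)$. *)

theory Defs
  imports "HOL-Analysis.Analysis"
begin

definition partition :: "'x measure \<Rightarrow> ('x \<Rightarrow> 'h::real_inner) \<Rightarrow> 'h \<Rightarrow> ennreal" where
  "partition \<nu> \<Gamma> \<theta> = (\<integral>\<^sup>+ x. ennreal (exp (\<theta> \<bullet> \<Gamma> x)) \<partial>\<nu>)"

definition domA :: "'x measure \<Rightarrow> ('x \<Rightarrow> 'h::real_inner) \<Rightarrow> 'h set" where
  "domA \<nu> \<Gamma> = {\<theta>. partition \<nu> \<Gamma> \<theta> < \<infinity>}"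

text \<open>Log-partition function A (real valued; meaningful on dom A).\<close>
definition logpart :: "'x measure \<Rightarrow> ('x \<Rightarrow> 'h::real_inner) \<Rightarrow> 'h \<Rightarrow> real" where
  "logpart \<nu> \<Gamma> \<theta> = ln (enn2real (partition \<nu> \<Gamma> \<theta>))"

definition expdens :: "'x measure \<Rightarrow> ('x \<Rightarrow> 'h::real_inner) \<Rightarrow> 'h \<Rightarrow> 'x \<Rightarrow> real" where
  "expdens \<nu> \<Gamma> \<theta> x = exp (\<theta> \<bullet> \<Gamma> x - logpart \<nu> \<Gamma> \<theta>)"

text \<open>Convex conjugate A* of A (A is +infinity outside dom A), extended-real valued.\<close>
definition conjA :: "'x measure \<Rightarrow> ('x \<Rightarrow> 'h::real_inner) \<Rightarrow> 'h \<Rightarrow> ereal" where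
  "conjA \<nu> \<Gamma> \<omega> = (SUP \<theta>\<in>domA \<nu> \<Gamma>. ereal (\<theta> \<bullet> \<omega> - logpart \<nu> \<Gamma> \<theta>))"

definition domAstar :: "'x measure \<Rightarrow> ('x \<Rightarrow> 'h::real_inner) \<Rightarrow> 'h set" where
  "domAstar \<nu> \<Gamma> = {\<omega>. conjA \<nu> \<Gamma> \<omega> < \<infinity>}"

text \<open>Real-valued version of A* (used on int dom A*, where A* is finite).\<close>
definition conjA_r :: "'x measure \<Rightarrow> ('x \<Rightarrow> 'h::real_inner) \<Rightarrow> 'h \<Rightarrow> real" where
  "conjA_r \<nu> \<Gamma> \<omega> = real_of_ereal (conjA \<nu> \<Gamma> \<omega>)"

definition gradient :: "('h::real_inner \<Rightarrow> real) \<Rightarrow> 'h \<Rightarrow> 'h" where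
  "gradient f x = (SOME g. (f has_derivative (\<lambda>v. g \<bullet> v)) (at x))"

definition minimal :: "'x measure \<Rightarrow> ('x \<Rightarrow> 'h::real_inner) \<Rightarrow> bool" where
  "minimal \<nu> \<Gamma> \<longleftrightarrow> \<not> (\<exists>\<theta> c. \<theta> \<noteq> 0 \<and> (AE x in \<nu>. \<theta> \<bullet> \<Gamma> x = c))"

definition steep :: "'x measure \<Rightarrow> ('x \<Rightarrow> 'h::real_inner) \<Rightarrow> bool" where
  "steep \<nu> \<Gamma> \<longleftrightarrow>
     (\<forall>\<theta>\<in>interior (domA \<nu> \<Gamma>). logpart \<nu> \<Gamma> differentiable (at \<theta>)) \<and>
     (\<forall>\<theta>s \<theta>0. (\<forall>t. \<theta>s t \<in> interior (domA \<nu> \<Gamma>)) \<longrightarrow> \<theta>s \<longlonglongrightarrow> \<theta>0 \<longrightarrow>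
        \<theta>0 \<in> frontier (domA \<nu> \<Gamma>) \<longrightarrow>
        filterlim (\<lambda>t. norm (gradient (logpart \<nu> \<Gamma>) (\<theta>s t))) at_top sequentially)"

definition has_mean :: "'x measure \<Rightarrow> ('x \<Rightarrow> 'h::euclidean_space) \<Rightarrow> 'h \<Rightarrow> 'h \<Rightarrow> bool" where
  "has_mean \<nu> \<Gamma> \<theta> \<omega> \<longleftrightarrow> \<theta> \<in> domA \<nu> \<Gamma> \<and>
     integrable \<nu> (\<lambda>x. expdens \<nu> \<Gamma> \<theta> x *\<^sub>R \<Gamma> x) \<and>
     (\<integral>x. expdens \<nu> \<Gamma> \<theta> x *\<^sub>R \<Gamma> x \<partial>\<nu>) = \<omega>"

definition qmean :: "'x measure \<Rightarrow> ('x \<Rightarrow> 'h::euclidean_space) \<Rightarrow> 'h \<Rightarrow> 'x \<Rightarrow> real" where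
  "qmean \<nu> \<Gamma> \<omega> = expdens \<nu> \<Gamma> (SOME \<theta>. has_mean \<nu> \<Gamma> \<theta> \<omega>)"

text \<open>KL(q, p) = integral of q log(q/p) d nu (for densities w.r.t. nu); +infinity if
  the integrand is not integrable (its negative part is always integrable for
  probability densities, so non-integrability means the integral is +infinity).\<close>
definition KL :: "'x measure \<Rightarrow> ('x \<Rightarrow> real) \<Rightarrow> ('x \<Rightarrow> real) \<Rightarrow> ereal" where
  "KL \<nu> q p = (if integrable \<nu> (\<lambda>x. q x * ln (q x / p x))
                then ereal (\<integral>x. q x * ln (q x / p x) \<partial>\<nu>) else \<infinity>)"

definition fD :: "'x measure \<Rightarrow> ('x \<Rightarrow> 'h::euclidean_space) \<Rightarrow> ('x \<Rightarrow> real) \<Rightarrow> 'h \<Rightarrow> ereal" where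
  "fD \<nu> \<Gamma> \<pi> \<omega> = (if \<exists>\<theta>. has_mean \<nu> \<Gamma> \<theta> \<omega> then KL \<nu> (qmean \<nu> \<Gamma> \<omega>) \<pi> else \<infinity>)"

definition fD_r :: "'x measure \<Rightarrow> ('x \<Rightarrow> 'h::euclidean_space) \<Rightarrow> ('x \<Rightarrow> real) \<Rightarrow> 'h \<Rightarrow> real" where
  "fD_r \<nu> \<Gamma> \<pi> \<omega> = real_of_ereal (fD \<nu> \<Gamma> \<pi> \<omega>)"

text \<open>LERC: pi = q^pi_{theta_pi} lies in the exponential family with statistic Gamma_pi,
  and E_{q_omega}[Gamma_pi] = L_pi E_{q_omega}[Gamma] for every member q_omega of Q.\<close>
definition LERC :: "'x measure \<Rightarrow> ('x \<Rightarrow> 'h::euclidean_space) \<Rightarrow> ('x \<Rightarrow> 'k::euclidean_space)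
     \<Rightarrow> 'k \<Rightarrow> ('h \<Rightarrow> 'k) \<Rightarrow> bool" where
  "LERC \<nu> \<Gamma> \<Gamma>\<pi> \<theta>\<pi> L \<longleftrightarrow> \<theta>\<pi> \<in> domA \<nu> \<Gamma>\<pi> \<and> linear L \<and>
     (\<forall>\<theta> \<omega>. has_mean \<nu> \<Gamma> \<theta> \<omega> \<longrightarrow>
        integrable \<nu> (\<lambda>x. expdens \<nu> \<Gamma> \<theta> x *\<^sub>R \<Gamma>\<pi> x) \<and>
        (\<integral>x. expdens \<nu> \<Gamma> \<theta> x *\<^sub>R \<Gamma>\<pi> x \<partial>\<nu>) = L \<omega>)"

definition bregman :: "('h::real_inner \<Rightarrow> real) \<Rightarrow> 'h \<Rightarrow> 'h \<Rightarrow> real" where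
  "bregman h \<omega> \<omega>' = h \<omega> - h \<omega>' - gradient h \<omega>' \<bullet> (\<omega> - \<omega>')"

definition rel_strongly_convex :: "real \<Rightarrow> ('h::real_inner \<Rightarrow> real) \<Rightarrow> ('h \<Rightarrow> real) \<Rightarrow> 'h set \<Rightarrow> bool" where
  "rel_strongly_convex m f h S \<longleftrightarrow>
     (\<forall>\<omega>\<in>S. f differentiable (at \<omega>) \<and> h differentiable (at \<omega>)) \<and>
     (\<forall>\<omega>\<in>S. \<forall>\<omega>'\<in>S. m * bregman h \<omega> \<omega>' \<le> bregman f \<omega> \<omega>')"

definition rel_smooth :: "real \<Rightarrow> ('h::real_inner \<Rightarrow> real) \<Rightarrow> ('h \<Rightarrow> real) \<Rightarrow> 'h set \<Rightarrow> bool" where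
  "rel_smooth l f h S \<longleftrightarrow>
     (\<forall>\<omega>\<in>S. f differentiable (at \<omega>) \<and> h differentiable (at \<omega>)) \<and>
     (\<forall>\<omega>\<in>S. \<forall>\<omega>'\<in>S. bregman f \<omega> \<omega>' \<le> l * bregman h \<omega> \<omega>')"

text \<open>Bregman projection w.r.t. A* onto C: the (unique) minimiser of
  d_{A*}(., omega) over C (A* = +infinity outside dom A*, so over C inter dom A*).\<close>
definition proj_Astar :: "'x measure \<Rightarrow> ('x \<Rightarrow> 'h::real_inner) \<Rightarrow> 'h set \<Rightarrow> 'h \<Rightarrow> 'h" where
  "proj_Astar \<nu> \<Gamma> C \<omega> = (THE \<omega>'. \<omega>' \<in> C \<inter> domAstar \<nu> \<Gamma> \<and>
      (\<forall>\<omega>''\<in>C \<inter> domAstar \<nu> \<Gamma>. bregman (conjA_r \<nu> \<Gamma>) \<omega>' \<omega> \<le> bregman (conjA_r \<nu> \<Gamma>) \<omega>'' \<omega>))"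

definition unique_minimizer :: "('h \<Rightarrow> ereal) \<Rightarrow> 'h set \<Rightarrow> 'h \<Rightarrow> bool" where
  "unique_minimizer f S w \<longleftrightarrow> w \<in> S \<and> (\<forall>\<omega>\<in>S. f w \<le> f \<omega>) \<and>
     (\<forall>\<omega>\<in>S. (\<forall>\<omega>'\<in>S. f \<omega> \<le> f \<omega>') \<longrightarrow> \<omega> = w)"

end

theory Submission
  imports Defs
begin

lemma exp_strict: assumes "x \<noteq> 0" shows "1 + x < exp (x::real)"
proof (cases "1 + x/2 \<ge> 0")
  case True
  have "exp x = exp (x/2) ^ 2" by (simp add: power2_eq_square flip: exp_add)
  also have "\<dots> \<ge> (1 + x/2)^2" using True exp_ge_add_one_self[of "x/2"] by (intro power_mono) auto
  finally have "exp x \<ge> 1 + x + x^2/4" by (simp add: power2_eq_square field_simps)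
  moreover have "x^2 > 0" using assms by simp
  ultimately show ?thesis by linarith
next
  case False
  then have "1 + x < 0" by linarith
  then show ?thesis using exp_gt_zero[of x] by linarith
qed

lemma exp_shift_ge: "exp m * (1 + y - m) \<le> exp (y::real)"
proof -
  have "exp m * (1 + (y - m)) \<le> exp m * exp (y - m)" by (intro mult_left_mono) auto
  moreover have "exp m * exp (y - m) = exp y" by (simp add: exp_diff)
  ultimately show ?thesis by (simp only: add_diff_eq)
qed

lemma exp_shift_gt: "y \<noteq> m \<Longrightarrow> exp m * (1 + y - m) < exp (y::real)"
proof -
  assume "y \<noteq> m"
  then have "exp m * (1 + (y - m)) < exp m * exp (y - m)" using exp_strict[of "y-m"] by (intro mult_strict_left_mono) auto
  moreover have "exp m * exp (y - m) = exp y" by (simp add: exp_diff)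
  ultimately show ?thesis by (simp only: add_diff_eq)
qed

locale EF =
  fixes \<nu> :: "'x measure" and \<Gamma> :: "'x \<Rightarrow> 'h::euclidean_space"
  assumes nt: "emeasure \<nu> (space \<nu>) \<noteq> 0"
    and measG[measurable]: "\<Gamma> \<in> borel_measurable \<nu>"
begin

abbreviation "Z \<equiv> partition \<nu> \<Gamma>"
abbreviation "D \<equiv> domA \<nu> \<Gamma>"
abbreviation "A \<equiv> logpart \<nu> \<Gamma>"
abbreviation "q \<equiv> expdens \<nu> \<Gamma>"
definition "Zr \<theta> = enn2real (Z \<theta>)"

lemma Z_pos: "Z \<theta> > 0"
proof (rule ccontr)
  assume "\<not> Z \<theta> > 0"
  then have "Z \<theta> = 0" by (simp add: not_gr_zero)
  then have "AE x in \<nu>. ennreal (exp (\<theta> \<bullet> \<Gamma> x)) = 0"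
    unfolding partition_def by (subst (asm) nn_integral_0_iff_AE) auto
  then have "AE x in \<nu>. False" by simp
  then have "ae_filter \<nu> = bot" by (simp add: eventually_False)
  then show False using nt ae_filter_eq_bot_iff by blast
qed

lemma D_iff: "\<theta> \<in> D \<longleftrightarrow> Z \<theta> < \<infinity>" by (simp add: domA_def)

lemma Zr: assumes "\<theta> \<in> D" shows "Zr \<theta> > 0" "Z \<theta> = ennreal (Zr \<theta>)" "exp (A \<theta>) = Zr \<theta>"
  "integrable \<nu> (\<lambda>x. exp (\<theta> \<bullet> \<Gamma> x))" "(\<integral>x. exp (\<theta> \<bullet> \<Gamma> x) \<partial>\<nu>) = Zr \<theta>"
proof -
  have fin: "Z \<theta> < \<infinity>" using assms D_iff by auto
  show 1: "Z \<theta> = ennreal (Zr \<theta>)" unfolding Zr_def using fin by (simp add: ennreal_enn2real_if)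
  show 2: "Zr \<theta> > 0" using Z_pos[of \<theta>] fin unfolding Zr_def by (simp add: enn2real_positive_iff)
  show "exp (A \<theta>) = Zr \<theta>" using 2 by (simp add: logpart_def Zr_def)
  show "integrable \<nu> (\<lambda>x. exp (\<theta> \<bullet> \<Gamma> x))"
    by (rule integrableI_nonneg) (use fin in \<open>auto simp: partition_def\<close>)
  show "(\<integral>x. exp (\<theta> \<bullet> \<Gamma> x) \<partial>\<nu>) = Zr \<theta>"
    by (subst integral_eq_nn_integral) (auto simp: Zr_def partition_def)
qed

lemma q_eq: "\<theta> \<in> D \<Longrightarrow> q \<theta> x = exp (\<theta> \<bullet> \<Gamma> x) / Zr \<theta>"
  by (simp add: expdens_def exp_diff Zr)

lemma q_pos: "q \<theta> x > 0" by (simp add: expdens_def)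

lemma q_int: assumes "\<theta> \<in> D" shows "integrable \<nu> (q \<theta>)" "(\<integral>x. q \<theta> x \<partial>\<nu>) = 1"
proof -
  have e: "q \<theta> = (\<lambda>x. exp (\<theta> \<bullet> \<Gamma> x) / Zr \<theta>)" using q_eq[OF assms] by auto
  show "integrable \<nu> (q \<theta>)" unfolding e using Zr[OF assms] by auto
  show "(\<integral>x. q \<theta> x \<partial>\<nu>) = 1" unfolding e using Zr[OF assms] by simp
qed

lemma D_convex: "convex D"
proof (rule convexI)
  fix a b :: 'h and u v :: real assume ab: "a \<in> D" "b \<in> D" and uv: "0 \<le> u" "0 \<le> v" "u + v = 1"
  have "Z (u *\<^sub>R a + v *\<^sub>R b) \<le> (\<integral>\<^sup>+x. ennreal (u * exp (a \<bullet> \<Gamma> x) + v * exp (b \<bullet> \<Gamma> x)) \<partial>\<nu>)"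
    unfolding partition_def
  proof (intro nn_integral_mono ennreal_leI)
    fix x
    have "exp (u * (a \<bullet> \<Gamma> x) + v * (b \<bullet> \<Gamma> x)) \<le> u * exp (a \<bullet> \<Gamma> x) + v * exp (b \<bullet> \<Gamma> x)"
    proof -
      have u: "u = 1 - v" using uv by simp
      show ?thesis using convex_onD[OF exp_convex, of v "a \<bullet> \<Gamma> x" "b \<bullet> \<Gamma> x"] uv unfolding u
        by simp
    qed
    then show "exp ((u *\<^sub>R a + v *\<^sub>R b) \<bullet> \<Gamma> x) \<le> u * exp (a \<bullet> \<Gamma> x) + v * exp (b \<bullet> \<Gamma> x)"
      by (simp add: inner_add_left)
  qed
  also have "\<dots> = ennreal u * Z a + ennreal v * Z b"
  proof -
    have "(\<integral>\<^sup>+x. ennreal (u * exp (a \<bullet> \<Gamma> x) + v * exp (b \<bullet> \<Gamma> x)) \<partial>\<nu>)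
       = (\<integral>\<^sup>+x. ennreal u * ennreal (exp (a \<bullet> \<Gamma> x)) + ennreal v * ennreal (exp (b \<bullet> \<Gamma> x)) \<partial>\<nu>)"
      using uv by (intro nn_integral_cong) (simp add: ennreal_mult ennreal_plus)
    also have "\<dots> = (\<integral>\<^sup>+x. ennreal u * ennreal (exp (a \<bullet> \<Gamma> x)) \<partial>\<nu>) + (\<integral>\<^sup>+x. ennreal v * ennreal (exp (b \<bullet> \<Gamma> x)) \<partial>\<nu>)"
      by (rule nn_integral_add) auto
    also have "\<dots> = ennreal u * Z a + ennreal v * Z b" unfolding partition_def
      by (simp add: nn_integral_cmult)
    finally show ?thesis .
  qed
  also have "\<dots> < \<infinity>" using ab by (auto simp: D_iff ennreal_mult_less_top)
  finally show "u *\<^sub>R a + v *\<^sub>R b \<in> D" by (simp add: D_iff)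
qed

end

lemma gradient_eq:
  fixes f :: "'a::real_inner \<Rightarrow> real"
  assumes "(f has_derivative (\<lambda>v. g \<bullet> v)) (at x)"
  shows "gradient f x = g"
proof -
  let ?g = "SOME g. (f has_derivative (\<lambda>v. g \<bullet> v)) (at x)"
  have "(f has_derivative (\<lambda>v. ?g \<bullet> v)) (at x)" using someI[of "\<lambda>g. (f has_derivative (\<lambda>v. g \<bullet> v)) (at x)", OF assms] .
  then have "(\<lambda>v. ?g \<bullet> v) = (\<lambda>v. g \<bullet> v)" using has_derivative_unique assms by blast
  then have "?g \<bullet> (?g - g) = g \<bullet> (?g - g)" by metis
  then have "(?g - g) \<bullet> (?g - g) = 0" by (simp add: inner_diff_left)
  then show ?thesis unfolding gradient_def by simp
qed

lemma grad_subgrad: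
  fixes f :: "'a::euclidean_space \<Rightarrow> real"
  assumes "f differentiable (at x)" "open S" "x \<in> S" "\<And>y. y \<in> S \<Longrightarrow> f x + g \<bullet> (y - x) \<le> f y"
  shows "(f has_derivative (\<lambda>v. g \<bullet> v)) (at x)" "gradient f x = g"
proof -
  obtain F where F: "(f has_derivative F) (at x)" using assms(1) unfolding differentiable_def by blast
  have lin: "linear F" using F has_derivative_linear by blast
  obtain r where r: "r > 0" "ball x r \<subseteq> S" using assms(2,3) open_contains_ball by blast
  have Fv: "F v = g \<bullet> v" for v
  proof (cases "v = 0")
    case True then show ?thesis using lin linear_0 by auto
  next
    case False
    define \<phi> where "\<phi> t = f (x + t *\<^sub>R v) - f x - t * (g \<bullet> v)" for t
    have d1: "((\<lambda>t. x + t *\<^sub>R v) has_derivative (\<lambda>t. t *\<^sub>R v)) (at 0)"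
      by (auto intro!: derivative_eq_intros)
    have d2: "(f has_derivative F) (at (x + 0 *\<^sub>R v))" using F by simp
    have "((\<lambda>t. f (x + t *\<^sub>R v)) has_derivative (\<lambda>t. F (t *\<^sub>R v))) (at 0)"
      using has_derivative_compose[OF d1 d2] by (simp add: o_def)
    moreover have "(\<lambda>t. F (t *\<^sub>R v)) = (*) (F v)" using lin by (auto simp: linear_scale fun_eq_iff)
    ultimately have "((\<lambda>t. f (x + t *\<^sub>R v)) has_real_derivative F v) (at 0)"
      by (simp add: has_field_derivative_def)
    then have der: "(\<phi> has_real_derivative (F v - g \<bullet> v)) (at 0)"
      unfolding \<phi>_def by (auto intro!: derivative_eq_intros)
    have mn: "\<forall>y. \<bar>0 - y\<bar> < r / norm v \<longrightarrow> \<phi> 0 \<le> \<phi> y"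
    proof (intro allI impI)
      fix t :: real assume "\<bar>0 - t\<bar> < r / norm v"
      then have "norm (t *\<^sub>R v) < r" using False by (simp add: field_simps)
      then have "x + t *\<^sub>R v \<in> S" using r by (auto simp: dist_norm)
      from assms(4)[OF this] show "\<phi> 0 \<le> \<phi> t" unfolding \<phi>_def by (simp add: algebra_simps)
    qed
    have pos: "0 < r / norm v" using r False by auto
    have "F v - g \<bullet> v = 0" by (rule DERIV_local_min[OF der pos mn])
    then show ?thesis by simp
  qed
  then have "F = (\<lambda>v. g \<bullet> v)" by auto
  then show "(f has_derivative (\<lambda>v. g \<bullet> v)) (at x)" using F by simp
  then show "gradient f x = g" by (rule gradient_eq)
qed

context EF begin

lemma hm_D: "has_mean \<nu> \<Gamma> \<theta> \<omega> \<Longrightarrow> \<theta> \<in> D" by (simp add: has_mean_def)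

lemma meas_q[measurable]: "q \<theta> \<in> borel_measurable \<nu>" unfolding expdens_def by measurable

lemma jensen:
  assumes hm: "has_mean \<nu> \<Gamma> \<theta> \<omega>" and th': "\<theta>' \<in> D"
  shows "A \<theta> + (\<theta>' - \<theta>) \<bullet> \<omega> \<le> A \<theta>'"
    and "A \<theta>' = A \<theta> + (\<theta>' - \<theta>) \<bullet> \<omega> \<Longrightarrow> AE x in \<nu>. (\<theta>' - \<theta>) \<bullet> \<Gamma> x = (\<theta>' - \<theta>) \<bullet> \<omega>"
proof -
  define d where "d = \<theta>' - \<theta>"
  define m where "m = d \<bullet> \<omega>"
  have th: "\<theta> \<in> D" using hm by (simp add: has_mean_def)
  have iG: "integrable \<nu> (\<lambda>x. q \<theta> x *\<^sub>R \<Gamma> x)" and mG: "(\<integral>x. q \<theta> x *\<^sub>R \<Gamma> x \<partial>\<nu>) = \<omega>"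
    using hm by (auto simp: has_mean_def)
  have Zt: "Zr \<theta> > 0" using Zr[OF th] by simp
  have Zt': "Zr \<theta>' > 0" using Zr[OF th'] by simp
  have e1: "q \<theta> x * exp (d \<bullet> \<Gamma> x) = exp (\<theta>' \<bullet> \<Gamma> x) / Zr \<theta>" for x
    using q_eq[OF th] by (simp add: d_def inner_diff_left flip: exp_add)
  have i1: "integrable \<nu> (\<lambda>x. q \<theta> x * exp (d \<bullet> \<Gamma> x))" unfolding e1 using Zr[OF th'] by auto
  have v1: "(\<integral>x. q \<theta> x * exp (d \<bullet> \<Gamma> x) \<partial>\<nu>) = Zr \<theta>' / Zr \<theta>" unfolding e1 using Zr[OF th'] by simp
  have e2: "q \<theta> x * (d \<bullet> \<Gamma> x) = d \<bullet> (q \<theta> x *\<^sub>R \<Gamma> x)" for x by simp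
  have i2': "integrable \<nu> (\<lambda>x. d \<bullet> (q \<theta> x *\<^sub>R \<Gamma> x))" using iG by (intro integrable_inner_right)
  have i2: "integrable \<nu> (\<lambda>x. q \<theta> x * (d \<bullet> \<Gamma> x))" using i2' by simp
  have v2': "(\<integral>x. d \<bullet> (q \<theta> x *\<^sub>R \<Gamma> x) \<partial>\<nu>) = m" unfolding m_def using iG mG by (subst integral_inner_right) auto
  have v2: "(\<integral>x. q \<theta> x * (d \<bullet> \<Gamma> x) \<partial>\<nu>) = m" using v2' by simp
  define f where "f x = q \<theta> x * exp (d \<bullet> \<Gamma> x) - exp m * ((1 - m) * q \<theta> x + q \<theta> x * (d \<bullet> \<Gamma> x))" for x
  have fi: "integrable \<nu> f" unfolding f_def using i1 i2 q_int[OF th] by auto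
  have fv: "(\<integral>x. f x \<partial>\<nu>) = Zr \<theta>' / Zr \<theta> - exp m"
    unfolding f_def using i1 i2 q_int[OF th] v1 v2 by (simp add: algebra_simps)
  have fe: "f x = q \<theta> x * (exp (d \<bullet> \<Gamma> x) - exp m * (1 + d \<bullet> \<Gamma> x - m))" for x
    unfolding f_def by (simp add: algebra_simps)
  have fnn: "f x \<ge> 0" for x unfolding fe using q_pos[of \<theta> x] exp_shift_ge[of m "d \<bullet> \<Gamma> x"] by simp
  have "0 \<le> (\<integral>x. f x \<partial>\<nu>)" using fnn by simp
  then have le: "Zr \<theta> * exp m \<le> Zr \<theta>'" unfolding fv using Zt by (simp add: field_simps)
  have AA: "A \<theta> = ln (Zr \<theta>)" "A \<theta>' = ln (Zr \<theta>')" by (simp_all add: logpart_def Zr_def)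
  have "ln (Zr \<theta> * exp m) \<le> ln (Zr \<theta>')" using le Zt Zt' by (subst ln_le_cancel_iff) auto
  then show "A \<theta> + (\<theta>' - \<theta>) \<bullet> \<omega> \<le> A \<theta>'" using Zt by (simp add: AA ln_mult d_def m_def)
  assume eq: "A \<theta>' = A \<theta> + (\<theta>' - \<theta>) \<bullet> \<omega>"
  then have "Zr \<theta>' = Zr \<theta> * exp m" using Zt Zt' unfolding AA d_def m_def
    by (metis exp_add exp_ln)
  then have "(\<integral>x. f x \<partial>\<nu>) = 0" unfolding fv using Zt by simp
  then have "AE x in \<nu>. f x = 0" using integral_nonneg_eq_0_iff_AE[OF fi] fnn by auto
  then show "AE x in \<nu>. (\<theta>' - \<theta>) \<bullet> \<Gamma> x = (\<theta>' - \<theta>) \<bullet> \<omega>"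
  proof (rule eventually_mono)
    fix x assume "f x = 0"
    then show "(\<theta>' - \<theta>) \<bullet> \<Gamma> x = (\<theta>' - \<theta>) \<bullet> \<omega>"
      unfolding fe using q_pos[of \<theta> x] exp_shift_gt[of "d \<bullet> \<Gamma> x" m] by (auto simp: d_def m_def)
  qed
qed

lemma abs_le_exp: "e > 0 \<Longrightarrow> \<bar>y\<bar> \<le> (exp (e * y) + exp (- (e * y))) / (e::real)"
proof -
  assume e: "e > 0"
  have "e * \<bar>y\<bar> \<le> exp (e * \<bar>y\<bar>)" using exp_ge_add_one_self[of "e * \<bar>y\<bar>"] by linarith
  also have "\<dots> \<le> exp (e * y) + exp (- (e * y))"
    by (cases "y \<ge> 0") (auto simp: add_increasing2 add_increasing)
  finally show ?thesis using e by (simp add: field_simps)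
qed

lemma interior_mean:
  assumes "\<theta> \<in> interior D"
  shows "has_mean \<nu> \<Gamma> \<theta> (\<integral>x. q \<theta> x *\<^sub>R \<Gamma> x \<partial>\<nu>)"
proof -
  obtain e where e: "e > 0" "ball \<theta> e \<subseteq> D" using assms by (meson mem_interior)
  define \<epsilon> where "\<epsilon> = e / 2"
  have ep: "\<epsilon> > 0" using e by (simp add: \<epsilon>_def)
  have inD: "\<theta> + s *\<^sub>R i \<in> D" if "i \<in> Basis" "\<bar>s\<bar> = \<epsilon>" for i s
  proof -
    have "norm (s *\<^sub>R i) = \<epsilon>" using that by simp
    then show ?thesis using e(2) e(1) by (auto simp: dist_norm \<epsilon>_def intro!: subsetD[OF e(2)])
  qed
  have th: "\<theta> \<in> D" using assms interior_subset by blast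
  define g where "g x = (\<Sum>i\<in>Basis. (exp ((\<theta> + \<epsilon> *\<^sub>R i) \<bullet> \<Gamma> x) + exp ((\<theta> + (-\<epsilon>) *\<^sub>R i) \<bullet> \<Gamma> x)) / (\<epsilon> * Zr \<theta>))" for x
  have gi: "integrable \<nu> g" unfolding g_def
  proof (rule Bochner_Integration.integrable_sum)
    fix i :: 'h assume i: "i \<in> Basis"
    have "integrable \<nu> (\<lambda>x. exp ((\<theta> + \<epsilon> *\<^sub>R i) \<bullet> \<Gamma> x))" "integrable \<nu> (\<lambda>x. exp ((\<theta> + (-\<epsilon>) *\<^sub>R i) \<bullet> \<Gamma> x))"
      using Zr(4)[OF inD[of i \<epsilon>]] Zr(4)[OF inD[of i "-\<epsilon>"]] ep i by auto
    then show "integrable \<nu> (\<lambda>x. (exp ((\<theta> + \<epsilon> *\<^sub>R i) \<bullet> \<Gamma> x) + exp ((\<theta> + (-\<epsilon>) *\<^sub>R i) \<bullet> \<Gamma> x)) / (\<epsilon> * Zr \<theta>))"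
      by (intro Bochner_Integration.integrable_divide Bochner_Integration.integrable_add)
  qed
  have bnd: "norm (q \<theta> x *\<^sub>R \<Gamma> x) \<le> norm (g x)" for x
  proof -
    have "norm (q \<theta> x *\<^sub>R \<Gamma> x) = q \<theta> x * norm (\<Gamma> x)" using q_pos[of \<theta> x] by simp
    also have "\<dots> \<le> q \<theta> x * (\<Sum>i\<in>Basis. \<bar>\<Gamma> x \<bullet> i\<bar>)" using q_pos[of \<theta> x] norm_le_l1[of "\<Gamma> x"]
      by (intro mult_left_mono) auto
    also have "\<dots> = (\<Sum>i\<in>Basis. q \<theta> x * \<bar>\<Gamma> x \<bullet> i\<bar>)" by (simp add: sum_distrib_left)
    also have "\<dots> \<le> g x" unfolding g_def
    proof (intro sum_mono)
      fix i :: 'h assume "i \<in> Basis"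
      have "q \<theta> x * \<bar>\<Gamma> x \<bullet> i\<bar> \<le> q \<theta> x * ((exp (\<epsilon> * (\<Gamma> x \<bullet> i)) + exp (- (\<epsilon> * (\<Gamma> x \<bullet> i)))) / \<epsilon>)"
        using q_pos[of \<theta> x] abs_le_exp[OF ep] by (intro mult_left_mono) auto
      also have "\<dots> = (exp ((\<theta> + \<epsilon> *\<^sub>R i) \<bullet> \<Gamma> x) + exp ((\<theta> + (-\<epsilon>) *\<^sub>R i) \<bullet> \<Gamma> x)) / (\<epsilon> * Zr \<theta>)"
      proof -
        have a: "exp ((\<theta> + \<epsilon> *\<^sub>R i) \<bullet> \<Gamma> x) = exp (\<theta> \<bullet> \<Gamma> x) * exp (\<epsilon> * (\<Gamma> x \<bullet> i))"
          by (simp add: inner_add_left exp_add inner_commute[of i])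
        have b: "exp ((\<theta> + (-\<epsilon>) *\<^sub>R i) \<bullet> \<Gamma> x) = exp (\<theta> \<bullet> \<Gamma> x) * exp (-(\<epsilon> * (\<Gamma> x \<bullet> i)))"
          by (simp add: inner_diff_left exp_diff inner_commute[of i] exp_minus field_simps)
        show ?thesis unfolding a b q_eq[OF th] using Zr(1)[OF th] ep by (simp add: field_simps)
      qed
      finally show "q \<theta> x * \<bar>\<Gamma> x \<bullet> i\<bar> \<le> (exp ((\<theta> + \<epsilon> *\<^sub>R i) \<bullet> \<Gamma> x) + exp ((\<theta> + (-\<epsilon>) *\<^sub>R i) \<bullet> \<Gamma> x)) / (\<epsilon> * Zr \<theta>)" .
    qed
    also have "\<dots> \<le> norm (g x)" by simp
    finally show ?thesis .
  qed
  have "integrable \<nu> (\<lambda>x. q \<theta> x *\<^sub>R \<Gamma> x)"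
    by (rule Bochner_Integration.integrable_bound[OF gi]) (use bnd in auto)
  then show ?thesis using th by (simp add: has_mean_def)
qed

end

lemma vertex_bound:
  fixes \<theta> :: "'a::euclidean_space" and K :: real
  assumes d: "\<delta> > 0" and h: "\<And>i s. i \<in> Basis \<Longrightarrow> \<bar>s\<bar> = 1 \<Longrightarrow> \<delta> * s * (\<theta> \<bullet> i) \<le> K"
  shows "\<delta> * norm \<theta> \<le> DIM('a) * K"
proof -
  define M where "M = Max ((\<lambda>i. \<bar>\<theta> \<bullet> i\<bar>) ` (Basis::'a set))"
  have "M \<in> (\<lambda>i. \<bar>\<theta> \<bullet> i\<bar>) ` (Basis::'a set)" unfolding M_def by (rule Max_in) auto
  then obtain j where j1: "j \<in> Basis" "M = \<bar>\<theta> \<bullet> j\<bar>" by auto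
  have j: "j \<in> Basis" "\<forall>i\<in>Basis. \<bar>\<theta> \<bullet> i\<bar> \<le> \<bar>\<theta> \<bullet> j\<bar>"
  proof -
    have "\<bar>\<theta> \<bullet> i\<bar> \<le> M" if "i \<in> Basis" for i unfolding M_def using that by (intro Max_ge) auto
    then show "j \<in> Basis" "\<forall>i\<in>Basis. \<bar>\<theta> \<bullet> i\<bar> \<le> \<bar>\<theta> \<bullet> j\<bar>" using j1 by auto
  qed
  have "norm \<theta> \<le> (\<Sum>i\<in>Basis. \<bar>\<theta> \<bullet> i\<bar>)" by (rule norm_le_l1)
  also have "\<dots> \<le> (\<Sum>i\<in>(Basis::'a set). \<bar>\<theta> \<bullet> j\<bar>)" using j by (intro sum_mono) auto
  also have "\<dots> = DIM('a) * \<bar>\<theta> \<bullet> j\<bar>" by simp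
  finally have 1: "norm \<theta> \<le> DIM('a) * \<bar>\<theta> \<bullet> j\<bar>" .
  have "\<delta> * \<bar>\<theta> \<bullet> j\<bar> \<le> K"
  proof (cases "\<theta> \<bullet> j \<ge> 0")
    case True then show ?thesis using h[OF j(1), of 1] by simp
  next
    case False then show ?thesis using h[OF j(1), of "-1"] by simp
  qed
  then have "\<delta> * norm \<theta> \<le> \<delta> * (DIM('a) * \<bar>\<theta> \<bullet> j\<bar>)" using 1 d by (intro mult_left_mono) auto
  also have "\<dots> = DIM('a) * (\<delta> * \<bar>\<theta> \<bullet> j\<bar>)" by simp
  also have "\<dots> \<le> DIM('a) * K" using \<open>\<delta> * \<bar>\<theta> \<bullet> j\<bar> \<le> K\<close> by (intro mult_left_mono) auto
  finally show ?thesis .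
qed

locale EF2 = EF \<nu> \<Gamma> for \<nu> :: "'x measure" and \<Gamma> :: "'x \<Rightarrow> 'h::euclidean_space" +
  assumes intne: "interior D \<noteq> {}" and mini: "minimal \<nu> \<Gamma>" and stp: "steep \<nu> \<Gamma>"
begin

abbreviation "domS \<equiv> domAstar \<nu> \<Gamma>"
abbreviation "cA \<equiv> conjA \<nu> \<Gamma>"
abbreviation "cAr \<equiv> conjA_r \<nu> \<Gamma>"

lemma D_ne: "D \<noteq> {}" using intne interior_subset by blast

lemma conj_ge: "\<theta> \<in> D \<Longrightarrow> ereal (\<theta> \<bullet> \<omega> - A \<theta>) \<le> cA \<omega>"
  unfolding conjA_def by (rule SUP_upper)

lemma conj_le: assumes "\<And>\<theta>. \<theta> \<in> D \<Longrightarrow> \<theta> \<bullet> \<omega> - A \<theta> \<le> c"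
  shows "\<omega> \<in> domS" "cAr \<omega> \<le> c" "cA \<omega> = ereal (cAr \<omega>)"
proof -
  have le: "cA \<omega> \<le> ereal c" unfolding conjA_def using assms by (intro SUP_least) auto
  obtain \<theta> where th: "\<theta> \<in> D" using D_ne by auto
  have ge: "ereal (\<theta> \<bullet> \<omega> - A \<theta>) \<le> cA \<omega>" using conj_ge[OF th] .
  show "\<omega> \<in> domS" using le by (auto simp: domAstar_def)
  show e: "cA \<omega> = ereal (cAr \<omega>)" using le ge unfolding conjA_r_def
    by (cases "cA \<omega>") auto
  show "cAr \<omega> \<le> c" using le e by simp
qed

lemma conj_real: assumes "\<omega> \<in> domS" shows "cA \<omega> = ereal (cAr \<omega>)"
proof -
  obtain \<theta> where th: "\<theta> \<in> D" using D_ne by auto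
  have ge: "ereal (\<theta> \<bullet> \<omega> - A \<theta>) \<le> cA \<omega>" using conj_ge[OF th] .
  show ?thesis using assms ge unfolding conjA_r_def domAstar_def by (cases "cA \<omega>") auto
qed

lemma conj_ge_r: "\<omega> \<in> domS \<Longrightarrow> \<theta> \<in> D \<Longrightarrow> \<theta> \<bullet> \<omega> - A \<theta> \<le> cAr \<omega>"
  using conj_ge[of \<theta> \<omega>] conj_real[of \<omega>] by simp

lemma conj_mean: assumes hm: "has_mean \<nu> \<Gamma> \<theta> \<omega>"
  shows "\<omega> \<in> domS" "cAr \<omega> = \<theta> \<bullet> \<omega> - A \<theta>" "cA \<omega> = ereal (\<theta> \<bullet> \<omega> - A \<theta>)"
proof -
  have th: "\<theta> \<in> D" using hm by (simp add: has_mean_def)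
  have "\<theta>' \<bullet> \<omega> - A \<theta>' \<le> \<theta> \<bullet> \<omega> - A \<theta>" if "\<theta>' \<in> D" for \<theta>'
    using jensen(1)[OF hm that] by (simp add: inner_diff_left)
  note c = conj_le[OF this]
  show "\<omega> \<in> domS" by (rule c(1))
  have "\<theta> \<bullet> \<omega> - A \<theta> \<le> cAr \<omega>" using conj_ge_r[OF c(1) th] .
  then show "cAr \<omega> = \<theta> \<bullet> \<omega> - A \<theta>" using c(2) by simp
  then show "cA \<omega> = ereal (\<theta> \<bullet> \<omega> - A \<theta>)" using c(3) by simp
qed

lemma conj_convex_ineq:
  assumes "\<omega> \<in> domS" "\<omega>' \<in> domS" "0 \<le> u" "u \<le> 1"
  shows "(1 - u) *\<^sub>R \<omega> + u *\<^sub>R \<omega>' \<in> domS" "cAr ((1 - u) *\<^sub>R \<omega> + u *\<^sub>R \<omega>') \<le> (1 - u) * cAr \<omega> + u * cAr \<omega>'"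
proof -
  have "\<theta> \<bullet> ((1 - u) *\<^sub>R \<omega> + u *\<^sub>R \<omega>') - A \<theta> \<le> (1 - u) * cAr \<omega> + u * cAr \<omega>'" if "\<theta> \<in> D" for \<theta>
  proof -
    have "\<theta> \<bullet> ((1 - u) *\<^sub>R \<omega> + u *\<^sub>R \<omega>') - A \<theta> = (1 - u) * (\<theta> \<bullet> \<omega> - A \<theta>) + u * (\<theta> \<bullet> \<omega>' - A \<theta>)"
      by (simp add: inner_add_right algebra_simps)
    also have "\<dots> \<le> (1 - u) * cAr \<omega> + u * cAr \<omega>'"
      using conj_ge_r[OF assms(1) that] conj_ge_r[OF assms(2) that] assms(3,4)
      by (intro add_mono mult_left_mono) auto
    finally show ?thesis .
  qed
  note c = conj_le[OF this]
  show "(1 - u) *\<^sub>R \<omega> + u *\<^sub>R \<omega>' \<in> domS" by (rule c(1))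
  show "cAr ((1 - u) *\<^sub>R \<omega> + u *\<^sub>R \<omega>') \<le> (1 - u) * cAr \<omega> + u * cAr \<omega>'" by (rule c(2))
qed

lemma domS_convex: "convex domS"
  unfolding convex_alt using conj_convex_ineq(1) by blast

lemma mean_unique: "has_mean \<nu> \<Gamma> \<theta> m \<Longrightarrow> has_mean \<nu> \<Gamma> \<theta> m' \<Longrightarrow> m = m'"
  by (simp add: has_mean_def)

lemma diff_A: "\<theta> \<in> interior D \<Longrightarrow> A differentiable (at \<theta>)"
  using stp by (simp add: steep_def)

lemma grad_A: assumes "\<theta> \<in> interior D" "has_mean \<nu> \<Gamma> \<theta> m"
  shows "(A has_derivative (\<lambda>v. m \<bullet> v)) (at \<theta>)" "gradient A \<theta> = m"
proof -
  have "A \<theta> + m \<bullet> (y - \<theta>) \<le> A y" if "y \<in> interior D" for y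
    using jensen(1)[OF assms(2), of y] that interior_subset by (auto simp: inner_commute)
  note g = grad_subgrad[OF diff_A[OF assms(1)] open_interior assms(1) this]
  show "(A has_derivative (\<lambda>v. m \<bullet> v)) (at \<theta>)" by (rule g(1))
  show "gradient A \<theta> = m" by (rule g(2))
qed

lemma A_conv_pt:
  assumes "x \<in> D" "y \<in> D" "0 \<le> u" "u \<le> 1" "has_mean \<nu> \<Gamma> ((1 - u) *\<^sub>R x + u *\<^sub>R y) g"
  shows "A ((1 - u) *\<^sub>R x + u *\<^sub>R y) \<le> (1 - u) * A x + u * A y"
proof -
  define z where "z = (1 - u) *\<^sub>R x + u *\<^sub>R y"
  have hz: "has_mean \<nu> \<Gamma> z g" using assms(5) by (simp add: z_def)
  have 1: "A z + (x - z) \<bullet> g \<le> A x" by (rule jensen(1)[OF hz assms(1)])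
  have 2: "A z + (y - z) \<bullet> g \<le> A y" by (rule jensen(1)[OF hz assms(2)])
  have 3: "(1 - u) * ((x - z) \<bullet> g) + u * ((y - z) \<bullet> g) = 0"
    unfolding z_def by (simp add: inner_diff_left inner_add_left algebra_simps)
  have "(1 - u) * (A z + (x - z) \<bullet> g) + u * (A z + (y - z) \<bullet> g) \<le> (1 - u) * A x + u * A y"
    using 1 2 assms(3,4) by (intro add_mono mult_left_mono) auto
  then show ?thesis using 3 unfolding z_def[symmetric] by (simp add: algebra_simps)
qed

lemma A_convex: "convex_on (interior D) A"
proof (rule convex_onI)
  fix t :: real and x y assume t: "0 < t" "t < 1" and xy: "x \<in> interior D" "y \<in> interior D"
  have z: "(1 - t) *\<^sub>R x + t *\<^sub>R y \<in> interior D"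
    using convexD[OF convex_interior[OF D_convex] xy, of "1-t" t] t by auto
  show "A ((1 - t) *\<^sub>R x + t *\<^sub>R y) \<le> (1 - t) * A x + t * A y"
    using A_conv_pt[OF _ _ _ _ interior_mean[OF z]] xy t interior_subset by auto
next
  show "convex (interior D)" by (rule convex_interior[OF D_convex])
qed

lemma A_cont: "continuous_on (interior D) A"
  by (rule convex_on_continuous[OF open_interior A_convex])

lemma inj_mean: assumes "has_mean \<nu> \<Gamma> \<theta> m" "has_mean \<nu> \<Gamma> \<theta>' m" shows "\<theta> = \<theta>'"
proof -
  have D: "\<theta> \<in> D" "\<theta>' \<in> D" using assms by (auto simp: has_mean_def)
  have 1: "A \<theta> + (\<theta>' - \<theta>) \<bullet> m \<le> A \<theta>'" by (rule jensen(1)[OF assms(1) D(2)])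
  have 2: "A \<theta>' + (\<theta> - \<theta>') \<bullet> m \<le> A \<theta>" by (rule jensen(1)[OF assms(2) D(1)])
  have "A \<theta>' = A \<theta> + (\<theta>' - \<theta>) \<bullet> m" using 1 2 by (simp add: inner_diff_left)
  from jensen(2)[OF assms(1) D(2) this] have "AE x in \<nu>. (\<theta>' - \<theta>) \<bullet> \<Gamma> x = (\<theta>' - \<theta>) \<bullet> m" .
  then have "\<theta>' - \<theta> = 0" using mini unfolding minimal_def by blast
  then show ?thesis by simp
qed

lemma LIM:
  assumes th: "\<And>n. \<theta>s n \<in> interior D" and hm: "\<And>n. has_mean \<nu> \<Gamma> (\<theta>s n) (\<omega>s n)"
    and t0: "\<theta>s \<longlonglongrightarrow> \<theta>0" and w0: "\<omega>s \<longlonglongrightarrow> \<omega>0"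
  shows "\<theta>0 \<in> interior D" "has_mean \<nu> \<Gamma> \<theta>0 \<omega>0"
proof -
  have cl: "\<theta>0 \<in> closure D" unfolding closure_sequential using th t0 interior_subset by blast
  show int: "\<theta>0 \<in> interior D"
  proof (rule ccontr)
    assume "\<theta>0 \<notin> interior D"
    then have fr: "\<theta>0 \<in> frontier D" using cl by (simp add: frontier_def)
    have "filterlim (\<lambda>t. norm (gradient A (\<theta>s t))) at_top sequentially"
      using stp th t0 fr unfolding steep_def by blast
    moreover have "gradient A (\<theta>s t) = \<omega>s t" for t using grad_A(2)[OF th hm] .
    ultimately have "filterlim (\<lambda>t. norm (\<omega>s t)) at_top sequentially" by simp
    then have "eventually (\<lambda>t. norm (\<omega>s t) > norm \<omega>0 + 1) sequentially"
      by (simp add: filterlim_at_top_dense)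
    moreover have "eventually (\<lambda>t. norm (\<omega>s t) < norm \<omega>0 + 1) sequentially"
      using tendsto_norm[OF w0] by (rule order_tendstoD) simp
    ultimately have "eventually (\<lambda>t. False) sequentially" by eventually_elim auto
    then show False by simp
  qed
  have lim: "A \<theta>0 + (y - \<theta>0) \<bullet> \<omega>0 \<le> A y" if y: "y \<in> D" for y
  proof -
    have "(\<lambda>n. A (\<theta>s n)) \<longlonglongrightarrow> A \<theta>0"
      using continuous_on_tendsto_compose[OF A_cont t0 int] th by auto
    then have "(\<lambda>n. A (\<theta>s n) + (y - \<theta>s n) \<bullet> \<omega>s n) \<longlonglongrightarrow> A \<theta>0 + (y - \<theta>0) \<bullet> \<omega>0"
      by (intro tendsto_intros t0 w0)
    moreover have "A (\<theta>s n) + (y - \<theta>s n) \<bullet> \<omega>s n \<le> A y" for n by (rule jensen(1)[OF hm y])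
    ultimately show ?thesis by (intro LIMSEQ_le_const2) auto
  qed
  have "A \<theta>0 + \<omega>0 \<bullet> (y - \<theta>0) \<le> A y" if "y \<in> interior D" for y
    using lim[of y] that interior_subset by (auto simp: inner_commute)
  note g = grad_subgrad[OF diff_A[OF int] open_interior int this]
  have "gradient A \<theta>0 = (\<integral>x. q \<theta>0 x *\<^sub>R \<Gamma> x \<partial>\<nu>)" by (rule grad_A(2)[OF int interior_mean[OF int]])
  then show "has_mean \<nu> \<Gamma> \<theta>0 \<omega>0" using g(2) interior_mean[OF int] by simp
qed

end

lemma abs1_cases: "\<bar>s::real\<bar> = 1 \<Longrightarrow> s = 1 \<or> s = -1" by auto

context EF2 begin

lemma vertex_A: assumes "\<theta>1 \<in> interior D"
  shows "\<exists>\<delta>>0. \<exists>K. \<forall>\<theta> m. has_mean \<nu> \<Gamma> \<theta> m \<longrightarrow> \<delta> * norm m \<le> DIM('h) * (K - A \<theta> - (\<theta>1 - \<theta>) \<bullet> m)"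
proof -
  obtain e where e: "e > 0" "ball \<theta>1 e \<subseteq> D" using assms by (meson mem_interior)
  define \<delta> where "\<delta> = e / 2"
  have dp: "\<delta> > 0" using e by (simp add: \<delta>_def)
  define K where "K = (\<Sum>i\<in>(Basis::'h set). \<bar>A (\<theta>1 + \<delta> *\<^sub>R i)\<bar> + \<bar>A (\<theta>1 + (-\<delta>) *\<^sub>R i)\<bar>)"
  have vD: "\<theta>1 + (s * \<delta>) *\<^sub>R i \<in> D" if "i \<in> Basis" "\<bar>s\<bar> = 1" for i s
  proof -
    have "norm ((s * \<delta>) *\<^sub>R i) < e" using that dp e(1) by (simp add: \<delta>_def abs_mult)
    then show ?thesis using e(2) by (auto simp: dist_norm)
  qed
  have vK: "A (\<theta>1 + (s * \<delta>) *\<^sub>R i) \<le> K" if "i \<in> Basis" "\<bar>s\<bar> = 1" for i s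
  proof -
    have "A (\<theta>1 + (s * \<delta>) *\<^sub>R i) \<le> \<bar>A (\<theta>1 + \<delta> *\<^sub>R i)\<bar> + \<bar>A (\<theta>1 + (-\<delta>) *\<^sub>R i)\<bar>"
      using abs1_cases[OF that(2)] by auto
    also have "\<dots> \<le> K" unfolding K_def using that(1)
      by (intro member_le_sum) auto
    finally show ?thesis .
  qed
  have "\<delta> * norm m \<le> DIM('h) * (K - A \<theta> - (\<theta>1 - \<theta>) \<bullet> m)" if hm: "has_mean \<nu> \<Gamma> \<theta> m" for \<theta> m
  proof (rule vertex_bound[OF dp])
    fix i :: 'h and s :: real assume i: "i \<in> Basis" "\<bar>s\<bar> = 1"
    have "A \<theta> + ((\<theta>1 + (s * \<delta>) *\<^sub>R i) - \<theta>) \<bullet> m \<le> A (\<theta>1 + (s * \<delta>) *\<^sub>R i)"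
      by (rule jensen(1)[OF hm vD[OF i]])
    then have "A \<theta> + (\<theta>1 - \<theta>) \<bullet> m + \<delta> * s * (m \<bullet> i) \<le> K" using vK[OF i]
      by (simp add: inner_add_left inner_diff_left inner_commute algebra_simps)
    then show "\<delta> * s * (m \<bullet> i) \<le> K - A \<theta> - (\<theta>1 - \<theta>) \<bullet> m" by simp
  qed
  then show ?thesis using dp by blast
qed

lemma vertex_S: assumes "\<omega> \<in> interior domS"
  shows "\<exists>\<delta>>0. \<exists>K. \<forall>\<theta> \<omega>'. has_mean \<nu> \<Gamma> \<theta> \<omega>' \<longrightarrow> \<delta> * norm \<theta> \<le> DIM('h) * (K - cAr \<omega>' - \<theta> \<bullet> (\<omega> - \<omega>'))"
proof -
  obtain e where e: "e > 0" "ball \<omega> e \<subseteq> domS" using assms by (meson mem_interior)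
  define \<delta> where "\<delta> = e / 2"
  have dp: "\<delta> > 0" using e by (simp add: \<delta>_def)
  define K where "K = (\<Sum>i\<in>(Basis::'h set). \<bar>cAr (\<omega> + \<delta> *\<^sub>R i)\<bar> + \<bar>cAr (\<omega> + (-\<delta>) *\<^sub>R i)\<bar>)"
  have vD: "\<omega> + (s * \<delta>) *\<^sub>R i \<in> domS" if "i \<in> Basis" "\<bar>s\<bar> = 1" for i s
  proof -
    have "norm ((s * \<delta>) *\<^sub>R i) < e" using that dp e(1) by (simp add: \<delta>_def abs_mult)
    then show ?thesis using e(2) by (auto simp: dist_norm)
  qed
  have vK: "cAr (\<omega> + (s * \<delta>) *\<^sub>R i) \<le> K" if "i \<in> Basis" "\<bar>s\<bar> = 1" for i s
  proof -
    have "cAr (\<omega> + (s * \<delta>) *\<^sub>R i) \<le> \<bar>cAr (\<omega> + \<delta> *\<^sub>R i)\<bar> + \<bar>cAr (\<omega> + (-\<delta>) *\<^sub>R i)\<bar>"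
      using abs1_cases[OF that(2)] by auto
    also have "\<dots> \<le> K" unfolding K_def using that(1)
      by (intro member_le_sum) auto
    finally show ?thesis .
  qed
  have "\<delta> * norm \<theta> \<le> DIM('h) * (K - cAr \<omega>' - \<theta> \<bullet> (\<omega> - \<omega>'))" if hm: "has_mean \<nu> \<Gamma> \<theta> \<omega>'" for \<theta> \<omega>'
  proof (rule vertex_bound[OF dp])
    fix i :: 'h and s :: real assume i: "i \<in> Basis" "\<bar>s\<bar> = 1"
    have th: "\<theta> \<in> D" using hm by (simp add: has_mean_def)
    have "\<theta> \<bullet> (\<omega> + (s * \<delta>) *\<^sub>R i) - A \<theta> \<le> cAr (\<omega> + (s * \<delta>) *\<^sub>R i)"
      by (rule conj_ge_r[OF vD[OF i] th])
    moreover have "cAr \<omega>' = \<theta> \<bullet> \<omega>' - A \<theta>" by (rule conj_mean(2)[OF hm])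
    ultimately have "cAr \<omega>' + \<theta> \<bullet> (\<omega> - \<omega>') + \<delta> * s * (\<theta> \<bullet> i) \<le> K" using vK[OF i]
      by (simp add: inner_add_right inner_diff_right algebra_simps)
    then show "\<delta> * s * (\<theta> \<bullet> i) \<le> K - cAr \<omega>' - \<theta> \<bullet> (\<omega> - \<omega>')" by simp
  qed
  then show ?thesis using dp by blast
qed

lemma coerc: assumes "\<omega> \<in> interior domS"
  shows "\<exists>\<delta>>0. \<exists>K. \<forall>\<theta>\<in>D. \<delta> * norm \<theta> \<le> DIM('h) * (K + A \<theta> - \<theta> \<bullet> \<omega>)"
proof -
  obtain e where e: "e > 0" "ball \<omega> e \<subseteq> domS" using assms by (meson mem_interior)
  define \<delta> where "\<delta> = e / 2"
  have dp: "\<delta> > 0" using e by (simp add: \<delta>_def)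
  define K where "K = (\<Sum>i\<in>(Basis::'h set). \<bar>cAr (\<omega> + \<delta> *\<^sub>R i)\<bar> + \<bar>cAr (\<omega> + (-\<delta>) *\<^sub>R i)\<bar>)"
  have vD: "\<omega> + (s * \<delta>) *\<^sub>R i \<in> domS" if "i \<in> Basis" "\<bar>s\<bar> = 1" for i s
  proof -
    have "norm ((s * \<delta>) *\<^sub>R i) < e" using that dp e(1) by (simp add: \<delta>_def abs_mult)
    then show ?thesis using e(2) by (auto simp: dist_norm)
  qed
  have vK: "cAr (\<omega> + (s * \<delta>) *\<^sub>R i) \<le> K" if "i \<in> Basis" "\<bar>s\<bar> = 1" for i s
  proof -
    have "cAr (\<omega> + (s * \<delta>) *\<^sub>R i) \<le> \<bar>cAr (\<omega> + \<delta> *\<^sub>R i)\<bar> + \<bar>cAr (\<omega> + (-\<delta>) *\<^sub>R i)\<bar>"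
      using abs1_cases[OF that(2)] by auto
    also have "\<dots> \<le> K" unfolding K_def using that(1)
      by (intro member_le_sum) auto
    finally show ?thesis .
  qed
  have "\<delta> * norm \<theta> \<le> DIM('h) * (K + A \<theta> - \<theta> \<bullet> \<omega>)" if th: "\<theta> \<in> D" for \<theta>
  proof (rule vertex_bound[OF dp])
    fix i :: 'h and s :: real assume i: "i \<in> Basis" "\<bar>s\<bar> = 1"
    have "\<theta> \<bullet> (\<omega> + (s * \<delta>) *\<^sub>R i) - A \<theta> \<le> cAr (\<omega> + (s * \<delta>) *\<^sub>R i)"
      by (rule conj_ge_r[OF vD[OF i] th])
    then have "\<theta> \<bullet> \<omega> + \<delta> * s * (\<theta> \<bullet> i) - A \<theta> \<le> K" using vK[OF i]
      by (simp add: inner_add_right algebra_simps)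
    then show "\<delta> * s * (\<theta> \<bullet> i) \<le> K + A \<theta> - \<theta> \<bullet> \<omega>" by simp
  qed
  then show ?thesis using dp by blast
qed

lemma coerc_b: assumes "b \<in> interior D"
  shows "\<exists>\<delta>>0. \<exists>K. \<forall>\<omega>\<in>domS. \<delta> * norm \<omega> \<le> DIM('h) * (K + cAr \<omega> - b \<bullet> \<omega>)"
proof -
  obtain e where e: "e > 0" "ball b e \<subseteq> D" using assms by (meson mem_interior)
  define \<delta> where "\<delta> = e / 2"
  have dp: "\<delta> > 0" using e by (simp add: \<delta>_def)
  define K where "K = (\<Sum>i\<in>(Basis::'h set). \<bar>A (b + \<delta> *\<^sub>R i)\<bar> + \<bar>A (b + (-\<delta>) *\<^sub>R i)\<bar>)"
  have vD: "b + (s * \<delta>) *\<^sub>R i \<in> D" if "i \<in> Basis" "\<bar>s\<bar> = 1" for i s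
  proof -
    have "norm ((s * \<delta>) *\<^sub>R i) < e" using that dp e(1) by (simp add: \<delta>_def abs_mult)
    then show ?thesis using e(2) by (auto simp: dist_norm)
  qed
  have vK: "A (b + (s * \<delta>) *\<^sub>R i) \<le> K" if "i \<in> Basis" "\<bar>s\<bar> = 1" for i s
  proof -
    have "A (b + (s * \<delta>) *\<^sub>R i) \<le> \<bar>A (b + \<delta> *\<^sub>R i)\<bar> + \<bar>A (b + (-\<delta>) *\<^sub>R i)\<bar>"
      using abs1_cases[OF that(2)] by auto
    also have "\<dots> \<le> K" unfolding K_def using that(1)
      by (intro member_le_sum) auto
    finally show ?thesis .
  qed
  have "\<delta> * norm \<omega> \<le> DIM('h) * (K + cAr \<omega> - b \<bullet> \<omega>)" if w: "\<omega> \<in> domS" for \<omega>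
  proof (rule vertex_bound[OF dp])
    fix i :: 'h and s :: real assume i: "i \<in> Basis" "\<bar>s\<bar> = 1"
    have "(b + (s * \<delta>) *\<^sub>R i) \<bullet> \<omega> - A (b + (s * \<delta>) *\<^sub>R i) \<le> cAr \<omega>"
      by (rule conj_ge_r[OF w vD[OF i]])
    then have "b \<bullet> \<omega> + \<delta> * s * (\<omega> \<bullet> i) - K \<le> cAr \<omega>" using vK[OF i]
      by (simp add: inner_add_left inner_commute algebra_simps)
    then show "\<delta> * s * (\<omega> \<bullet> i) \<le> K + cAr \<omega> - b \<bullet> \<omega>" by simp
  qed
  then show ?thesis using dp by blast
qed

lemma conj_lower: "\<exists>a c. \<forall>\<omega>\<in>domS. - a * norm \<omega> - c \<le> cAr \<omega>"
proof -
  obtain \<theta> where th: "\<theta> \<in> D" using D_ne by auto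
  have "- norm \<theta> * norm \<omega> - A \<theta> \<le> cAr \<omega>" if "\<omega> \<in> domS" for \<omega>
  proof -
    have "- norm \<theta> * norm \<omega> \<le> \<theta> \<bullet> \<omega>" using Cauchy_Schwarz_ineq2[of \<theta> \<omega>] by (simp add: abs_le_iff)
    then show ?thesis using conj_ge_r[OF that th] by simp
  qed
  then show ?thesis by blast
qed

end

context EF2 begin

lemma A_lower: assumes "has_mean \<nu> \<Gamma> \<theta>a ma" "\<theta> \<in> D"
  shows "A \<theta>a - norm (\<theta> - \<theta>a) * norm ma \<le> A \<theta>"
proof -
  have "- (norm (\<theta> - \<theta>a) * norm ma) \<le> (\<theta> - \<theta>a) \<bullet> ma"
    using Cauchy_Schwarz_ineq2[of "\<theta> - \<theta>a" ma] by (simp add: abs_le_iff)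
  then show ?thesis using jensen(1)[OF assms] by linarith
qed

lemma minimizer_exists:
  assumes w: "\<omega> \<in> interior domS"
  shows "\<exists>\<theta>0\<in>D. \<forall>\<theta>\<in>D. A \<theta>0 - \<theta>0 \<bullet> \<omega> \<le> A \<theta> - \<theta> \<bullet> \<omega>"
proof -
  define G where "G \<theta> = A \<theta> - \<theta> \<bullet> \<omega>" for \<theta>
  obtain \<delta> K where dK: "\<delta> > 0" "\<forall>\<theta>\<in>D. \<delta> * norm \<theta> \<le> DIM('h) * (K + A \<theta> - \<theta> \<bullet> \<omega>)"
    using coerc[OF w] by blast
  obtain \<theta>1 where th1: "\<theta>1 \<in> D" using D_ne by auto
  define S where "S = {\<theta>\<in>D. G \<theta> \<le> G \<theta>1}"
  have Gl: "- K \<le> G \<theta>" if "\<theta> \<in> D" for \<theta>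
  proof -
    have "0 \<le> \<delta> * norm \<theta>" using dK by simp
    also have "\<dots> \<le> DIM('h) * (K + G \<theta>)" using dK(2) that by (simp add: G_def add_diff_eq)
    finally show ?thesis by (simp add: zero_le_mult_iff)
  qed
  define R where "R = DIM('h) * (K + G \<theta>1) / \<delta>"
  have SR: "norm \<theta> \<le> R" if "\<theta> \<in> S" for \<theta>
  proof -
    have "\<delta> * norm \<theta> \<le> DIM('h) * (K + G \<theta>)" using dK(2) that by (simp add: G_def S_def add_diff_eq)
    also have "\<dots> \<le> DIM('h) * (K + G \<theta>1)" using that by (intro mult_left_mono) (auto simp: S_def)
    finally show ?thesis using dK(1) by (simp add: R_def field_simps)
  qed
  have Sne: "G ` S \<noteq> {}" using th1 by (auto simp: S_def)
  have Sbdd: "bdd_below (G ` S)" using Gl by (auto simp: S_def bdd_below_def)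
  define m where "m = Inf (G ` S)"
  have mle: "m \<le> G \<theta>" if "\<theta> \<in> S" for \<theta> unfolding m_def using Sbdd that by (intro cInf_lower) auto
  have "\<exists>\<theta>\<in>S. G \<theta> < m + 1 / (Suc n)" for n
  proof -
    have "Inf (G ` S) < m + 1 / Suc n" unfolding m_def by simp
    then show ?thesis using cInf_less_iff[OF Sne Sbdd] by auto
  qed
  then obtain \<theta>s where ts: "\<And>n. \<theta>s n \<in> S" "\<And>n. G (\<theta>s n) < m + 1 / Suc n" by metis
  have "bounded (range \<theta>s)" using SR ts(1) by (auto simp: bounded_iff)
  then obtain \<theta>0 r where r: "strict_mono r" "(\<theta>s \<circ> r) \<longlonglongrightarrow> \<theta>0"
    using bounded_imp_convergent_subsequence by blast
  define F where "F \<theta> = (\<integral>\<^sup>+x. ennreal (exp (\<theta> \<bullet> \<Gamma> x - \<theta> \<bullet> \<omega>)) \<partial>\<nu>)" for \<theta>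
  have FZ: "F \<theta> = Z \<theta> * ennreal (exp (- (\<theta> \<bullet> \<omega>)))" for \<theta>
  proof -
    have "F \<theta> = (\<integral>\<^sup>+x. ennreal (exp (\<theta> \<bullet> \<Gamma> x)) * ennreal (exp (- (\<theta> \<bullet> \<omega>))) \<partial>\<nu>)"
      unfolding F_def by (intro nn_integral_cong) (simp add: exp_diff exp_minus field_simps flip: ennreal_mult)
    also have "\<dots> = Z \<theta> * ennreal (exp (- (\<theta> \<bullet> \<omega>)))" unfolding partition_def
      by (rule nn_integral_multc) simp
    finally show ?thesis .
  qed
  have FG: "F \<theta> = ennreal (exp (G \<theta>))" if "\<theta> \<in> D" for \<theta>
    unfolding FZ Zr(2)[OF that] G_def using Zr(3)[OF that, symmetric]
    by (simp add: exp_diff exp_minus field_simps flip: ennreal_mult)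
  have "F \<theta>0 = (\<integral>\<^sup>+x. liminf (\<lambda>n. ennreal (exp (\<theta>s (r n) \<bullet> \<Gamma> x - \<theta>s (r n) \<bullet> \<omega>))) \<partial>\<nu>)"
    unfolding F_def
  proof (intro nn_integral_cong)
    fix x
    have "(\<lambda>n. ennreal (exp (\<theta>s (r n) \<bullet> \<Gamma> x - \<theta>s (r n) \<bullet> \<omega>))) \<longlonglongrightarrow> ennreal (exp (\<theta>0 \<bullet> \<Gamma> x - \<theta>0 \<bullet> \<omega>))"
      using r(2) unfolding o_def by (intro tendsto_intros) auto
    then show "ennreal (exp (\<theta>0 \<bullet> \<Gamma> x - \<theta>0 \<bullet> \<omega>)) = liminf (\<lambda>n. ennreal (exp (\<theta>s (r n) \<bullet> \<Gamma> x - \<theta>s (r n) \<bullet> \<omega>)))"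
      by (metis lim_imp_Liminf trivial_limit_sequentially)
  qed
  also have "\<dots> \<le> liminf (\<lambda>n. F (\<theta>s (r n)))" unfolding F_def
    by (rule nn_integral_liminf) simp
  also have "\<dots> \<le> liminf (\<lambda>n. ennreal (exp (m + 1 / Suc n)))"
  proof (intro Liminf_mono always_eventually allI)
    fix n
    have "\<theta>s (r n) \<in> D" using ts(1) by (simp add: S_def)
    then have "F (\<theta>s (r n)) = ennreal (exp (G (\<theta>s (r n))))" by (rule FG)
    also have "\<dots> \<le> ennreal (exp (m + 1 / Suc (r n)))" using ts(2)[of "r n"] by (intro ennreal_leI) auto
    also have "\<dots> \<le> ennreal (exp (m + 1 / Suc n))"
      using seq_suble[OF r(1), of n] by (intro ennreal_leI) (auto simp: frac_le)
    finally show "F (\<theta>s (r n)) \<le> ennreal (exp (m + 1 / Suc n))" .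
  qed
  also have "\<dots> = ennreal (exp m)"
  proof (rule lim_imp_Liminf)
    show "(\<lambda>n. ennreal (exp (m + 1 / Suc n))) \<longlonglongrightarrow> ennreal (exp m)"
    proof -
      have "(\<lambda>n. m + inverse (real (Suc n))) \<longlonglongrightarrow> m"
        by (rule LIMSEQ_inverse_real_of_nat_add)
      then have "(\<lambda>n. m + 1 / (Suc n)) \<longlonglongrightarrow> m" by (simp add: inverse_eq_divide)
      then have "(\<lambda>n. exp (m + 1 / (Suc n))) \<longlonglongrightarrow> exp m" by (rule tendsto_exp)
      then show ?thesis by (rule tendsto_ennrealI)
    qed
  qed simp
  finally have F0: "F \<theta>0 \<le> ennreal (exp m)" .
  have "Z \<theta>0 = F \<theta>0 * ennreal (exp (\<theta>0 \<bullet> \<omega>))" unfolding FZ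
    by (simp add: mult.assoc flip: ennreal_mult exp_add)
  also have "\<dots> \<le> ennreal (exp m) * ennreal (exp (\<theta>0 \<bullet> \<omega>))" using F0 by (rule mult_right_mono) simp
  also have "\<dots> < \<infinity>" by (simp flip: ennreal_mult)
  finally have "Z \<theta>0 < \<infinity>" .
  then have t0D: "\<theta>0 \<in> D" by (simp add: D_iff)
  then have "ennreal (exp (G \<theta>0)) \<le> ennreal (exp m)" using F0 FG by simp
  then have "G \<theta>0 \<le> m" by (simp add: ennreal_le_iff)
  have "G \<theta>0 \<le> G \<theta>" if "\<theta> \<in> D" for \<theta>
  proof (cases "\<theta> \<in> S")
    case True then show ?thesis using mle \<open>G \<theta>0 \<le> m\<close> by force
  next
    case False then have "G \<theta>1 < G \<theta>" using that by (auto simp: S_def)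
    moreover have "\<theta>1 \<in> S" using th1 by (simp add: S_def)
    ultimately show ?thesis using mle[of \<theta>1] \<open>G \<theta>0 \<le> m\<close> by linarith
  qed
  then show ?thesis using t0D unfolding G_def by blast
qed

end

context EF2 begin

lemma surj:
  assumes w: "\<omega> \<in> interior domS"
  shows "\<exists>\<theta>. \<theta> \<in> interior D \<and> has_mean \<nu> \<Gamma> \<theta> \<omega>"
proof -
  obtain \<theta>0 where t0: "\<theta>0 \<in> D" and mn: "\<And>\<theta>. \<theta> \<in> D \<Longrightarrow> A \<theta>0 - \<theta>0 \<bullet> \<omega> \<le> A \<theta> - \<theta> \<bullet> \<omega>"
    using minimizer_exists[OF w] by blast
  obtain \<theta>1 where t1: "\<theta>1 \<in> interior D" using intne by auto
  have int: "\<theta>0 \<in> interior D"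
  proof (rule ccontr)
    assume nint: "\<theta>0 \<notin> interior D"
    have fr: "\<theta>0 \<in> frontier D" using nint t0 closure_subset by (auto simp: frontier_def)
    have ne: "\<theta>1 \<noteq> \<theta>0" using nint t1 by auto
    define t where "t n = 1 / real (Suc (Suc n))" for n
    have tp: "0 < t n" "t n < 1" for n by (auto simp: t_def)
    define ths where "ths n = \<theta>0 + t n *\<^sub>R (\<theta>1 - \<theta>0)" for n
    have ths_int: "ths n \<in> interior D" for n
    proof -
      have "ths n \<in> open_segment \<theta>1 \<theta>0" unfolding in_segment(2)
        using ne tp[of n] by (intro conjI exI[of _ "1 - t n"]) (auto simp: ths_def algebra_simps)
      then show ?thesis using in_interior_closure_convex_segment[OF D_convex t1, of \<theta>0] t0 closure_subset by blast
    qed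
    have tl: "t \<longlonglongrightarrow> 0"
    proof -
      have "(\<lambda>n. 1 / real (Suc (Suc n))) \<longlonglongrightarrow> 0"
        using LIMSEQ_Suc[OF LIMSEQ_Suc[OF lim_inverse_n']] by simp
      then show ?thesis by (simp add: t_def[abs_def])
    qed
    have thl: "ths \<longlonglongrightarrow> \<theta>0"
      using tendsto_add[OF tendsto_const tendsto_scaleR[OF tl tendsto_const], of \<theta>0 "\<theta>1 - \<theta>0"]
      by (simp add: ths_def[abs_def])
    define ms where "ms n = (\<integral>x. q (ths n) x *\<^sub>R \<Gamma> x \<partial>\<nu>)" for n
    have hm: "has_mean \<nu> \<Gamma> (ths n) (ms n)" for n unfolding ms_def by (rule interior_mean[OF ths_int])
    have gr: "gradient A (ths n) = ms n" for n by (rule grad_A(2)[OF ths_int hm])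
    have inf0: "filterlim (\<lambda>n. norm (gradient A (ths n))) at_top sequentially"
      by (rule conjunct2[OF stp[unfolded steep_def], rule_format, of ths \<theta>0]) (use ths_int thl fr in auto)
    have inf: "filterlim (\<lambda>n. norm (ms n)) at_top sequentially" using inf0 unfolding gr .
    obtain ma where hma: "has_mean \<nu> \<Gamma> \<theta>1 ma" using interior_mean[OF t1] by blast
    obtain \<delta> K where dK: "\<delta> > 0" "\<And>\<theta> m. has_mean \<nu> \<Gamma> \<theta> m \<Longrightarrow> \<delta> * norm m \<le> DIM('h) * (K - A \<theta> - (\<theta>1 - \<theta>) \<bullet> m)"
      using vertex_A[OF t1] by blast
    have "\<exists>n. (\<theta>1 - \<theta>0) \<bullet> (ms n - \<omega>) < 0"
    proof (rule ccontr)
      assume "\<not> ?thesis"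
      then have ge: "(\<theta>1 - \<theta>0) \<bullet> \<omega> \<le> (\<theta>1 - \<theta>0) \<bullet> ms n" for n by (auto simp: inner_diff_right not_less)
      define B where "B = DIM('h) * (K - A \<theta>1 + norm (\<theta>0 - \<theta>1) * norm ma + norm (\<theta>1 - \<theta>0) * norm \<omega>) / \<delta>"
      have "norm (ms n) \<le> B" for n
      proof -
        have 1: "A \<theta>1 - norm (ths n - \<theta>1) * norm ma \<le> A (ths n)"
          by (rule A_lower[OF hma]) (use ths_int interior_subset in blast)
        have e1: "ths n - \<theta>1 = (1 - t n) *\<^sub>R (\<theta>0 - \<theta>1)" by (simp add: ths_def algebra_simps)
        have "norm (ths n - \<theta>1) \<le> norm (\<theta>0 - \<theta>1)" unfolding e1 using tp[of n] by (simp add: mult_left_le_one_le)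
        then have 2: "norm (ths n - \<theta>1) * norm ma \<le> norm (\<theta>0 - \<theta>1) * norm ma" by (rule mult_right_mono) simp
        have e2: "(\<theta>1 - ths n) \<bullet> ms n = (1 - t n) * ((\<theta>1 - \<theta>0) \<bullet> ms n)" by (simp add: ths_def algebra_simps inner_diff_left)
        have "- (norm (\<theta>1 - \<theta>0) * norm \<omega>) \<le> (\<theta>1 - \<theta>0) \<bullet> \<omega>"
          using Cauchy_Schwarz_ineq2[of "\<theta>1 - \<theta>0" \<omega>] by (simp add: abs_le_iff)
        then have "- (norm (\<theta>1 - \<theta>0) * norm \<omega>) \<le> (\<theta>1 - \<theta>0) \<bullet> ms n" using ge[of n] by linarith
        then have 3: "- (norm (\<theta>1 - \<theta>0) * norm \<omega>) \<le> (\<theta>1 - ths n) \<bullet> ms n" unfolding e2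
        proof -
          assume a: "- (norm (\<theta>1 - \<theta>0) * norm \<omega>) \<le> (\<theta>1 - \<theta>0) \<bullet> ms n"
          have b: "0 \<le> norm (\<theta>1 - \<theta>0) * norm \<omega>" by simp
          have c: "0 \<le> 1 - t n" "1 - t n \<le> 1" using tp[of n] by auto
          have "(1 - t n) * (- (norm (\<theta>1 - \<theta>0) * norm \<omega>)) \<le> (1 - t n) * ((\<theta>1 - \<theta>0) \<bullet> ms n)"
            using a c by (intro mult_left_mono) auto
          moreover have "(1 - t n) * (- (norm (\<theta>1 - \<theta>0) * norm \<omega>)) = - (norm (\<theta>1 - \<theta>0) * norm \<omega>) + t n * (norm (\<theta>1 - \<theta>0) * norm \<omega>)"
            by (simp add: algebra_simps)
          moreover have "0 \<le> t n * (norm (\<theta>1 - \<theta>0) * norm \<omega>)" using b tp[of n] by simp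
          ultimately show "- (norm (\<theta>1 - \<theta>0) * norm \<omega>) \<le> (1 - t n) * ((\<theta>1 - \<theta>0) \<bullet> ms n)" by linarith
        qed
        have "\<delta> * norm (ms n) \<le> DIM('h) * (K - A (ths n) - (\<theta>1 - ths n) \<bullet> ms n)" by (rule dK(2)[OF hm])
        also have "\<dots> \<le> DIM('h) * (K - A \<theta>1 + norm (\<theta>0 - \<theta>1) * norm ma + norm (\<theta>1 - \<theta>0) * norm \<omega>)"
          using 1 2 3 by (intro mult_left_mono) auto
        finally show ?thesis using dK(1) by (simp add: B_def field_simps)
      qed
      moreover have "eventually (\<lambda>n. norm (ms n) > B) sequentially"
        using inf by (simp add: filterlim_at_top_dense)
      ultimately have "eventually (\<lambda>n. False) sequentially"
      proof -
        assume bd: "\<And>n. norm (ms n) \<le> B" and ev: "eventually (\<lambda>n. norm (ms n) > B) sequentially"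
        show ?thesis using ev by (rule eventually_mono) (use bd in \<open>simp add: not_less[symmetric]\<close>)
      qed
      then show False by simp
    qed
    then obtain n where neg: "(\<theta>1 - \<theta>0) \<bullet> (ms n - \<omega>) < 0" by blast
    have j: "A (ths n) + (\<theta>0 - ths n) \<bullet> ms n \<le> A \<theta>0" by (rule jensen(1)[OF hm t0])
    have m: "A \<theta>0 - \<theta>0 \<bullet> \<omega> \<le> A (ths n) - ths n \<bullet> \<omega>" by (rule mn) (use ths_int interior_subset in blast)
    have e: "(\<theta>0 - ths n) \<bullet> ms n - \<theta>0 \<bullet> \<omega> + ths n \<bullet> \<omega> = - t n * ((\<theta>1 - \<theta>0) \<bullet> (ms n - \<omega>))"
      by (simp add: ths_def algebra_simps inner_diff_left inner_diff_right inner_add_left)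
    have "0 < - t n * ((\<theta>1 - \<theta>0) \<bullet> (ms n - \<omega>))" using neg tp[of n] by (simp add: mult_pos_neg)
    then show False using j m e by linarith
  qed
  have "A \<theta>0 + \<omega> \<bullet> (y - \<theta>0) \<le> A y" if "y \<in> interior D" for y
  proof -
    have "y \<in> D" using that interior_subset by blast
    then show ?thesis using mn[of y] by (simp add: inner_diff_right inner_commute)
  qed
  note g = grad_subgrad[OF diff_A[OF int] open_interior int this]
  have "gradient A \<theta>0 = (\<integral>x. q \<theta>0 x *\<^sub>R \<Gamma> x \<partial>\<nu>)" by (rule grad_A(2)[OF int interior_mean[OF int]])
  then have "has_mean \<nu> \<Gamma> \<theta>0 \<omega>" using g(2) interior_mean[OF int] by simp
  then show ?thesis using int by blast
qed

end

context EF2 begin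

lemma mean_int:
  assumes t: "\<theta> \<in> interior D" and hm: "has_mean \<nu> \<Gamma> \<theta> \<omega>0"
  shows "\<omega>0 \<in> interior domS"
proof -
  obtain e where e: "e > 0" "ball \<theta> e \<subseteq> D" using t by (meson mem_interior)
  define r where "r = e / 2"
  have rp: "r > 0" using e by (simp add: r_def)
  have bi: "ball \<theta> e \<subseteq> interior D" using e(2) by (simp add: interior_maximal)
  have si: "sphere \<theta> r \<subseteq> interior D" using bi rp by (auto simp: r_def)
  define Dv where "Dv y = A y - A \<theta> - (y - \<theta>) \<bullet> \<omega>0" for y
  have Dv0: "0 \<le> Dv y" if "y \<in> D" for y using jensen(1)[OF hm that] by (simp add: Dv_def)
  have cont: "continuous_on (sphere \<theta> r) Dv"
    unfolding Dv_def by (intro continuous_intros continuous_on_subset[OF A_cont si])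
  obtain p where p: "p \<in> sphere \<theta> r" "\<And>y. y \<in> sphere \<theta> r \<Longrightarrow> Dv p \<le> Dv y"
    using continuous_attains_inf[OF compact_sphere _ cont] rp by (auto simp: less_imp_le)
  define c0 where "c0 = Dv p"
  have pD: "p \<in> D" using p(1) si interior_subset by blast
  have c0p: "c0 > 0"
  proof -
    have "c0 \<ge> 0" using Dv0[OF pD] by (simp add: c0_def)
    moreover have "c0 \<noteq> 0"
    proof
      assume "c0 = 0"
      then have "A p = A \<theta> + (p - \<theta>) \<bullet> \<omega>0" by (simp add: c0_def Dv_def)
      from jensen(2)[OF hm pD this] have "AE x in \<nu>. (p - \<theta>) \<bullet> \<Gamma> x = (p - \<theta>) \<bullet> \<omega>0" .
      then have "p - \<theta> = 0" using mini unfolding minimal_def by blast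
      then show False using p(1) rp by (simp add: dist_norm)
    qed
    ultimately show ?thesis by simp
  qed
  have key: "c0 / r * norm (y - \<theta>) - c0 \<le> Dv y" if y: "y \<in> D" for y
  proof (cases "norm (y - \<theta>) < r")
    case True
    then have "c0 / r * norm (y - \<theta>) \<le> c0 / r * r" using c0p rp by (intro mult_left_mono) auto
    then have "c0 / r * norm (y - \<theta>) \<le> c0" using rp by simp
    then show ?thesis using Dv0[OF y] by linarith
  next
    case False
    then have ny: "norm (y - \<theta>) \<ge> r" by simp
    define l where "l = r / norm (y - \<theta>)"
    have np: "norm (y - \<theta>) > 0" using ny rp by linarith
    have l: "0 < l" "l \<le> 1" using np rp ny by (auto simp: l_def field_simps)
    define z where "z = (1 - l) *\<^sub>R \<theta> + l *\<^sub>R y"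
    have zt: "z - \<theta> = l *\<^sub>R (y - \<theta>)" by (simp add: z_def algebra_simps)
    have "norm (z - \<theta>) = r" unfolding zt using l np rp by (simp add: l_def)
    then have zs: "z \<in> sphere \<theta> r" by (simp add: dist_norm norm_minus_commute)
    then have zi: "z \<in> interior D" using si by blast
    have tD: "\<theta> \<in> D" using t interior_subset by blast
    have Az: "A z \<le> (1 - l) * A \<theta> + l * A y"
      unfolding z_def by (rule A_conv_pt[OF tD y]) (use l interior_mean[OF zi[unfolded z_def]] in auto)
    have "c0 \<le> Dv z" using p(2)[OF zs] by (simp add: c0_def)
    also have "\<dots> = A z - A \<theta> - l * ((y - \<theta>) \<bullet> \<omega>0)" unfolding Dv_def zt by simp
    also have "\<dots> \<le> l * Dv y" using Az by (simp add: Dv_def algebra_simps)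
    finally have "c0 \<le> l * Dv y" .
    then have "c0 / l \<le> Dv y" using l by (simp add: field_simps)
    moreover have "c0 / l = c0 / r * norm (y - \<theta>)" using rp np by (simp add: l_def field_simps)
    ultimately show ?thesis using c0p by linarith
  qed
  have "ball \<omega>0 (c0 / r) \<subseteq> domS"
  proof
    fix \<omega> assume "\<omega> \<in> ball \<omega>0 (c0 / r)"
    then have wn: "norm (\<omega> - \<omega>0) < c0 / r" by (simp add: dist_norm norm_minus_commute)
    have "y \<bullet> \<omega> - A y \<le> c0 - A \<theta> + \<theta> \<bullet> \<omega>0 + \<theta> \<bullet> (\<omega> - \<omega>0)" if y: "y \<in> D" for y
    proof -
      have e1: "y \<bullet> \<omega> - A y = - Dv y - A \<theta> + \<theta> \<bullet> \<omega>0 + \<theta> \<bullet> (\<omega> - \<omega>0) + (y - \<theta>) \<bullet> (\<omega> - \<omega>0)"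
        by (simp add: Dv_def algebra_simps inner_diff_left inner_diff_right)
      have "(y - \<theta>) \<bullet> (\<omega> - \<omega>0) \<le> norm (y - \<theta>) * norm (\<omega> - \<omega>0)" by (rule norm_cauchy_schwarz)
      also have "\<dots> \<le> norm (y - \<theta>) * (c0 / r)" using wn by (intro mult_left_mono) auto
      finally have "(y - \<theta>) \<bullet> (\<omega> - \<omega>0) \<le> c0 / r * norm (y - \<theta>)" by (simp add: mult.commute)
      then show ?thesis unfolding e1 using key[OF y] by linarith
    qed
    then show "\<omega> \<in> domS" by (rule conj_le(1))
  qed
  then show ?thesis using c0p rp by (meson centre_in_ball divide_pos_pos interior_maximal open_ball subsetD)
qed

definition th :: "'h \<Rightarrow> 'h" where "th \<omega> = (SOME \<theta>. \<theta> \<in> interior D \<and> has_mean \<nu> \<Gamma> \<theta> \<omega>)"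

lemma th: assumes "\<omega> \<in> interior domS" shows "th \<omega> \<in> interior D" "has_mean \<nu> \<Gamma> (th \<omega>) \<omega>"
  using someI_ex[OF surj[OF assms]] unfolding th_def by auto

lemma th_unique: "has_mean \<nu> \<Gamma> \<theta> \<omega> \<Longrightarrow> \<omega> \<in> interior domS \<Longrightarrow> th \<omega> = \<theta>"
  using inj_mean th(2) by blast

lemma cAr_th: "\<omega> \<in> interior domS \<Longrightarrow> cAr \<omega> = th \<omega> \<bullet> \<omega> - A (th \<omega>)"
  using conj_mean(2)[OF th(2)] by blast

end

context EF2 begin

lemma th_cont:
  assumes w: "\<omega> \<in> interior domS" and e: "e > 0"
  shows "\<exists>d>0. \<forall>\<omega>'. norm (\<omega>' - \<omega>) < d \<longrightarrow> \<omega>' \<in> interior domS \<and> norm (th \<omega>' - th \<omega>) < e"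
proof (rule ccontr)
  assume neg: "\<not> ?thesis"
  obtain \<rho> where rho: "\<rho> > 0" "ball \<omega> \<rho> \<subseteq> interior domS" using w open_interior open_contains_ball by blast
  obtain \<delta> K where dK: "\<delta> > 0" "\<And>\<theta> \<omega>'. has_mean \<nu> \<Gamma> \<theta> \<omega>' \<Longrightarrow> \<delta> * norm \<theta> \<le> DIM('h) * (K - cAr \<omega>' - \<theta> \<bullet> (\<omega> - \<omega>'))"
    using vertex_S[OF w] by blast
  obtain a c where ac: "\<And>\<omega>. \<omega> \<in> domS \<Longrightarrow> - a * norm \<omega> - c \<le> cAr \<omega>" using conj_lower by blast
  define dd where "dd n = min (min \<rho> (\<delta> / (2 * DIM('h)))) (1 / Suc n)" for n
  have ddp: "dd n > 0" for n using rho dK by (simp add: dd_def)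
  have ex: "\<exists>\<omega>'. norm (\<omega>' - \<omega>) < dd n \<and> norm (th \<omega>' - th \<omega>) \<ge> e" for n
  proof -
    have "\<not> (\<forall>\<omega>'. norm (\<omega>' - \<omega>) < dd n \<longrightarrow> \<omega>' \<in> interior domS \<and> norm (th \<omega>' - th \<omega>) < e)"
      
    proof
      assume a: "\<forall>\<omega>'. norm (\<omega>' - \<omega>) < dd n \<longrightarrow> \<omega>' \<in> interior domS \<and> norm (th \<omega>' - th \<omega>) < e"
      have "\<exists>d>0. \<forall>\<omega>'. norm (\<omega>' - \<omega>) < d \<longrightarrow> \<omega>' \<in> interior domS \<and> norm (th \<omega>' - th \<omega>) < e"
        by (rule exI[of _ "dd n"]) (use a ddp[of n] in simp)
      then show False using neg by (rule notE[rotated])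
    qed
    then obtain \<omega>' where o: "norm (\<omega>' - \<omega>) < dd n" "\<omega>' \<notin> interior domS \<or> \<not> norm (th \<omega>' - th \<omega>) < e" by blast
    have "norm (\<omega>' - \<omega>) < \<rho>" using o(1) by (simp add: dd_def)
    then have "\<omega>' \<in> interior domS" using rho by (auto simp: dist_norm norm_minus_commute)
    then show ?thesis using o by (auto simp: not_less)
  qed
  have "\<exists>ws. \<forall>n. norm (ws n - \<omega>) < dd n \<and> norm (th (ws n) - th \<omega>) \<ge> e"
    by (rule choice) (use ex in blast)
  then obtain ws where ws0: "\<forall>n. norm (ws n - \<omega>) < dd n \<and> norm (th (ws n) - th \<omega>) \<ge> e" by blast
  have ws: "\<And>n. norm (ws n - \<omega>) < dd n" "\<And>n. norm (th (ws n) - th \<omega>) \<ge> e" using ws0 by auto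
  have wsi: "ws n \<in> interior domS" for n
  proof -
    have "norm (ws n - \<omega>) < \<rho>" using ws(1)[of n] by (simp add: dd_def)
    then show ?thesis using rho by (auto simp: dist_norm norm_minus_commute)
  qed
  have wsS: "ws n \<in> domS" for n using wsi interior_subset by blast
  have wl: "ws \<longlonglongrightarrow> \<omega>"
  proof -
    have l0: "(\<lambda>n. 1 / real (Suc n)) \<longlonglongrightarrow> 0" using LIMSEQ_Suc[OF lim_inverse_n'] by simp
    have nb: "\<forall>n. norm (ws n - \<omega>) \<le> 1 / real (Suc n)"
    proof
      fix n show "norm (ws n - \<omega>) \<le> 1 / real (Suc n)" using ws(1)[of n] unfolding dd_def by linarith
    qed
    have "(\<lambda>n. ws n - \<omega>) \<longlonglongrightarrow> 0"
      using Lim_null_comparison[of "\<lambda>n. ws n - \<omega>" "\<lambda>n. 1 / real (Suc n)", OF always_eventually[OF nb] l0] .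
    then show ?thesis by (simp add: LIM_zero_iff)
  qed
  define B where "B = 2 * DIM('h) * (K + \<bar>a\<bar> * (norm \<omega> + \<rho>) + c) / \<delta>"
  have bnd: "norm (th (ws n)) \<le> B" for n
  proof -
    let ?t = "th (ws n)"
    have hm: "has_mean \<nu> \<Gamma> ?t (ws n)" by (rule th(2)[OF wsi])
    have n1: "norm (ws n - \<omega>) < \<rho>" "norm (ws n - \<omega>) < \<delta> / (2 * DIM('h))" using ws(1)[of n] by (auto simp: dd_def)
    have nw: "norm (ws n) \<le> norm \<omega> + \<rho>" using n1(1) norm_triangle_ineq2[of "ws n" \<omega>] by linarith
    have "- a * norm (ws n) \<ge> - \<bar>a\<bar> * (norm \<omega> + \<rho>)"
    proof -
      have "\<bar>a * norm (ws n)\<bar> \<le> \<bar>a\<bar> * (norm \<omega> + \<rho>)" using nw by (simp add: abs_mult mult_left_mono)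
      then show ?thesis by (simp add: abs_le_iff)
    qed
    then have c1: "- cAr (ws n) \<le> \<bar>a\<bar> * (norm \<omega> + \<rho>) + c" using ac[OF wsS[of n]] by linarith
    have "- (?t \<bullet> (\<omega> - ws n)) \<le> norm ?t * norm (\<omega> - ws n)"
      using Cauchy_Schwarz_ineq2[of ?t "\<omega> - ws n"] by (simp add: abs_le_iff)
    also have "\<dots> \<le> norm ?t * (\<delta> / (2 * DIM('h)))" using n1(2) by (intro mult_left_mono) (auto simp: norm_minus_commute)
    finally have c2: "- (?t \<bullet> (\<omega> - ws n)) \<le> norm ?t * (\<delta> / (2 * DIM('h)))" .
    have "\<delta> * norm ?t \<le> DIM('h) * (K - cAr (ws n) - ?t \<bullet> (\<omega> - ws n))" by (rule dK(2)[OF hm])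
    also have "\<dots> \<le> DIM('h) * (K + \<bar>a\<bar> * (norm \<omega> + \<rho>) + c + norm ?t * (\<delta> / (2 * DIM('h))))"
      using c1 c2 by (intro mult_left_mono) auto
    also have "\<dots> = DIM('h) * (K + \<bar>a\<bar> * (norm \<omega> + \<rho>) + c) + norm ?t * \<delta> / 2"
    proof -
      have dimp: "real DIM('h) > 0" by simp
      have "real DIM('h) * (norm ?t * (\<delta> / (2 * real DIM('h)))) = norm ?t * \<delta> / 2" using dimp by (simp add: field_simps)
      then show ?thesis by (simp only: distrib_left)
    qed
    finally have "\<delta> / 2 * norm ?t \<le> DIM('h) * (K + \<bar>a\<bar> * (norm \<omega> + \<rho>) + c)" by (simp add: field_simps)
    then have "norm ?t \<le> 2 * DIM('h) * (K + \<bar>a\<bar> * (norm \<omega> + \<rho>) + c) / \<delta>" using dK(1) by (simp add: field_simps)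
    then show ?thesis unfolding B_def .
  qed
  have "bounded (range (\<lambda>n. th (ws n)))" using bnd by (auto simp: bounded_iff)
  then obtain \<theta>s r where r: "strict_mono r" "((\<lambda>n. th (ws n)) \<circ> r) \<longlonglongrightarrow> \<theta>s"
    using bounded_imp_convergent_subsequence by blast
  have l1: "(\<lambda>n. th (ws (r n))) \<longlonglongrightarrow> \<theta>s" using r(2) by (simp add: o_def)
  have l2: "(\<lambda>n. ws (r n)) \<longlonglongrightarrow> \<omega>" using LIMSEQ_subseq_LIMSEQ[OF wl r(1)] by (simp add: o_def)
  have "has_mean \<nu> \<Gamma> \<theta>s \<omega>" by (rule LIM(2)[OF th(1)[OF wsi] th(2)[OF wsi] l1 l2])
  then have "\<theta>s = th \<omega>" using th_unique[OF _ w] by simp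
  then have "(\<lambda>n. norm (th (ws (r n)) - th \<omega>)) \<longlonglongrightarrow> 0" using l1 by (intro tendsto_norm_zero) (simp add: LIM_zero)
  moreover have "e \<le> norm (th (ws (r n)) - th \<omega>)" for n using ws(2) .
  ultimately have "e \<le> 0" by (intro LIMSEQ_le_const) auto
  then show False using e by simp
qed

end

context EF2 begin

lemma cAr_deriv:
  assumes w: "\<omega> \<in> interior domS"
  shows "(cAr has_derivative (\<lambda>v. th \<omega> \<bullet> v)) (at \<omega>)" "gradient cAr \<omega> = th \<omega>" "cAr differentiable (at \<omega>)"
proof -
  have wS: "\<omega> \<in> domS" using w interior_subset by blast
  have R: "0 \<le> cAr x - cAr \<omega> - th \<omega> \<bullet> (x - \<omega>) \<and> cAr x - cAr \<omega> - th \<omega> \<bullet> (x - \<omega>) \<le> norm (th x - th \<omega>) * norm (x - \<omega>)"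
    if x: "x \<in> interior domS" for x
  proof -
    have xS: "x \<in> domS" using x interior_subset by blast
    have tD: "th \<omega> \<in> D" "th x \<in> D" using th(1)[OF w] th(1)[OF x] interior_subset by blast+
    have 1: "th \<omega> \<bullet> x - A (th \<omega>) \<le> cAr x" by (rule conj_ge_r[OF xS tD(1)])
    have 2: "th x \<bullet> \<omega> - A (th x) \<le> cAr \<omega>" by (rule conj_ge_r[OF wS tD(2)])
    have 3: "cAr \<omega> = th \<omega> \<bullet> \<omega> - A (th \<omega>)" "cAr x = th x \<bullet> x - A (th x)" using cAr_th w x by auto
    have 4: "(th x - th \<omega>) \<bullet> (x - \<omega>) \<le> norm (th x - th \<omega>) * norm (x - \<omega>)" by (rule norm_cauchy_schwarz)
    show ?thesis using 1 2 3 4 by (simp add: inner_diff_left inner_diff_right algebra_simps)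
  qed
  show d: "(cAr has_derivative (\<lambda>v. th \<omega> \<bullet> v)) (at \<omega>)"
    unfolding has_derivative_at'
  proof (intro conjI allI impI)
    show "bounded_linear ((\<bullet>) (th \<omega>))" by (rule bounded_linear_inner_right)
    fix e :: real assume e: "e > 0"
    obtain d where d: "d > 0" "\<And>\<omega>'. norm (\<omega>' - \<omega>) < d \<Longrightarrow> \<omega>' \<in> interior domS \<and> norm (th \<omega>' - th \<omega>) < e"
      using th_cont[OF w e] by blast
    have "\<forall>x'. 0 < norm (x' - \<omega>) \<and> norm (x' - \<omega>) < d \<longrightarrow> norm (cAr x' - cAr \<omega> - th \<omega> \<bullet> (x' - \<omega>)) / norm (x' - \<omega>) < e"
    proof (intro allI impI)
      fix x' assume x': "0 < norm (x' - \<omega>) \<and> norm (x' - \<omega>) < d"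
      then have xi: "x' \<in> interior domS" "norm (th x' - th \<omega>) < e" using d(2) by auto
      have "norm (cAr x' - cAr \<omega> - th \<omega> \<bullet> (x' - \<omega>)) \<le> norm (th x' - th \<omega>) * norm (x' - \<omega>)"
        using R[OF xi(1)] by simp
      also have "\<dots> < e * norm (x' - \<omega>)" using xi(2) x' by (intro mult_strict_right_mono) auto
      finally show "norm (cAr x' - cAr \<omega> - th \<omega> \<bullet> (x' - \<omega>)) / norm (x' - \<omega>) < e"
        using x' by (simp add: field_simps)
    qed
    then show "\<exists>d>0. \<forall>x'. 0 < norm (x' - \<omega>) \<and> norm (x' - \<omega>) < d \<longrightarrow> norm (cAr x' - cAr \<omega> - th \<omega> \<bullet> (x' - \<omega>)) / norm (x' - \<omega>) < e"
      using d(1) by blast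
  qed
  show "gradient cAr \<omega> = th \<omega>" by (rule gradient_eq[OF d])
  show "cAr differentiable (at \<omega>)" using d unfolding differentiable_def by blast
qed

lemma strict_conv:
  assumes w: "\<omega> \<in> interior domS" "\<omega>' \<in> interior domS" "\<omega> \<noteq> \<omega>'"
  shows "cAr ((1/2) *\<^sub>R \<omega> + (1/2) *\<^sub>R \<omega>') < (1/2) * cAr \<omega> + (1/2) * cAr \<omega>'"
proof -
  define wm where "wm = (1/2) *\<^sub>R \<omega> + (1/2) *\<^sub>R \<omega>'"
  have wmi: "wm \<in> interior domS" unfolding wm_def
    using convexD[OF convex_interior[OF domS_convex] w(1,2), of "1/2" "1/2"] by simp
  define tm where "tm = th wm"
  have tmD: "tm \<in> D" using th(1)[OF wmi] interior_subset unfolding tm_def by blast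
  have wS: "\<omega> \<in> domS" "\<omega>' \<in> domS" using w interior_subset by blast+
  have c: "cAr wm = tm \<bullet> wm - A tm" using cAr_th[OF wmi] by (simp add: tm_def)
  have 1: "tm \<bullet> \<omega> - A tm \<le> cAr \<omega>" by (rule conj_ge_r[OF wS(1) tmD])
  have 2: "tm \<bullet> \<omega>' - A tm \<le> cAr \<omega>'" by (rule conj_ge_r[OF wS(2) tmD])
  have e: "cAr wm = (1/2) * (tm \<bullet> \<omega> - A tm) + (1/2) * (tm \<bullet> \<omega>' - A tm)"
  proof -
    have "tm \<bullet> wm = (1/2) * (tm \<bullet> \<omega>) + (1/2) * (tm \<bullet> \<omega>')" unfolding wm_def by (simp add: inner_add_right)
    then show ?thesis unfolding c by (simp add: algebra_simps)
  qed
  have "tm \<bullet> \<omega> - A tm < cAr \<omega>"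
  proof (rule ccontr)
    assume "\<not> ?thesis"
    then have eq: "tm \<bullet> \<omega> - A tm = cAr \<omega>" using 1 by simp
    have hm: "has_mean \<nu> \<Gamma> (th \<omega>) \<omega>" by (rule th(2)[OF w(1)])
    have "cAr \<omega> = th \<omega> \<bullet> \<omega> - A (th \<omega>)" by (rule cAr_th[OF w(1)])
    then have "A tm = A (th \<omega>) + (tm - th \<omega>) \<bullet> \<omega>" using eq by (simp add: inner_diff_left)
    from jensen(2)[OF hm tmD this] have "AE x in \<nu>. (tm - th \<omega>) \<bullet> \<Gamma> x = (tm - th \<omega>) \<bullet> \<omega>" .
    then have "tm - th \<omega> = 0" using mini unfolding minimal_def by blast
    then have "tm = th \<omega>" by simp
    then have "has_mean \<nu> \<Gamma> tm \<omega>" "has_mean \<nu> \<Gamma> tm wm" using hm th(2)[OF wmi] by (auto simp: tm_def)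
    then have "\<omega> = wm" using mean_unique by blast
    then have "\<omega> = \<omega>'" unfolding wm_def by (metis add_diff_cancel_left' scaleR_half_double scaleR_left_distrib
      scaleR_right_distrib eq_iff_diff_eq_0 scaleR_cancel_left field_sum_of_halves)
    then show False using w(3) by simp
  qed
  then have a: "(1/2) * (tm \<bullet> \<omega> - A tm) < (1/2) * cAr \<omega>" by simp
  have b: "(1/2) * (tm \<bullet> \<omega>' - A tm) \<le> (1/2) * cAr \<omega>'" using 2 by simp
  show ?thesis using e a b unfolding wm_def[symmetric] by linarith
qed

end

context EF2 begin

lemma hmin_interior:
  assumes C: "convex C" and w1: "\<omega>1 \<in> C" "\<omega>1 \<in> domS" and w2: "\<omega>2 \<in> C" "\<omega>2 \<in> interior domS"
    and mn: "\<And>\<omega>. \<omega> \<in> C \<Longrightarrow> \<omega> \<in> domS \<Longrightarrow> cAr \<omega>1 - b \<bullet> \<omega>1 \<le> cAr \<omega> - b \<bullet> \<omega>"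
  shows "\<omega>1 \<in> interior domS"
proof (rule ccontr)
  assume nint: "\<omega>1 \<notin> interior domS"
  have ne: "\<omega>2 \<noteq> \<omega>1" using nint w2 by auto
  define t where "t n = 1 / real (Suc (Suc n))" for n
  have tp: "0 < t n" "t n < 1" for n by (auto simp: t_def)
  define ws where "ws n = \<omega>1 + t n *\<^sub>R (\<omega>2 - \<omega>1)" for n
  have wsi: "ws n \<in> interior domS" for n
  proof -
    have "ws n \<in> open_segment \<omega>2 \<omega>1" unfolding in_segment(2)
      using ne tp[of n] by (intro conjI exI[of _ "1 - t n"]) (auto simp: ws_def algebra_simps)
    then show ?thesis using in_interior_closure_convex_segment[OF domS_convex w2(2), of \<omega>1] w1 closure_subset by blast
  qed
  have wsC: "ws n \<in> C" for n
  proof -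
    have "(1 - t n) *\<^sub>R \<omega>1 + t n *\<^sub>R \<omega>2 \<in> C" using convexD[OF C w1(1) w2(1), of "1 - t n" "t n"] tp[of n] by auto
    then show ?thesis by (simp add: ws_def algebra_simps)
  qed
  have tl: "t \<longlonglongrightarrow> 0"
  proof -
    have "(\<lambda>n. 1 / real (Suc (Suc n))) \<longlonglongrightarrow> 0"
      using LIMSEQ_Suc[OF LIMSEQ_Suc[OF lim_inverse_n']] by simp
    then show ?thesis by (simp add: t_def[abs_def])
  qed
  have wl: "ws \<longlonglongrightarrow> \<omega>1"
    using tendsto_add[OF tendsto_const tendsto_scaleR[OF tl tendsto_const], of \<omega>1 "\<omega>2 - \<omega>1"]
    by (simp add: ws_def[abs_def])
  define ts where "ts n = th (ws n)" for n
  have tsD: "ts n \<in> D" for n using th(1)[OF wsi] interior_subset unfolding ts_def by blast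
  have ineq: "b \<bullet> (\<omega>2 - \<omega>1) \<le> ts n \<bullet> (\<omega>2 - \<omega>1)" for n
  proof -
    have wsS: "ws n \<in> domS" using wsi interior_subset by blast
    have 1: "cAr \<omega>1 - b \<bullet> \<omega>1 \<le> cAr (ws n) - b \<bullet> ws n" by (rule mn[OF wsC wsS])
    have 2: "ts n \<bullet> \<omega>1 - A (ts n) \<le> cAr \<omega>1" by (rule conj_ge_r[OF w1(2) tsD])
    have 3: "cAr (ws n) = ts n \<bullet> ws n - A (ts n)" using cAr_th[OF wsi] by (simp add: ts_def)
    have 4: "t n * (ts n \<bullet> (\<omega>2 - \<omega>1)) - t n * (b \<bullet> (\<omega>2 - \<omega>1)) \<ge> 0"
      using 1 2 3 by (simp add: ws_def inner_add_right inner_diff_right algebra_simps)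
    then have "t n * (ts n \<bullet> (\<omega>2 - \<omega>1) - b \<bullet> (\<omega>2 - \<omega>1)) \<ge> 0" by (simp add: algebra_simps)
    then show ?thesis using tp[of n] by (simp add: zero_le_mult_iff)
  qed
  obtain \<delta> K where dK: "\<delta> > 0" "\<And>\<theta> \<omega>'. has_mean \<nu> \<Gamma> \<theta> \<omega>' \<Longrightarrow> \<delta> * norm \<theta> \<le> DIM('h) * (K - cAr \<omega>' - \<theta> \<bullet> (\<omega>2 - \<omega>'))"
    using vertex_S[OF w2(2)] by blast
  obtain a c where ac: "\<And>\<omega>. \<omega> \<in> domS \<Longrightarrow> - a * norm \<omega> - c \<le> cAr \<omega>" using conj_lower by blast
  define B where "B = DIM('h) * (K + \<bar>a\<bar> * (norm \<omega>1 + norm \<omega>2) + c + \<bar>b \<bullet> (\<omega>2 - \<omega>1)\<bar>) / \<delta>"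
  have bnd: "norm (ts n) \<le> B" for n
  proof -
    have hm: "has_mean \<nu> \<Gamma> (ts n) (ws n)" using th(2)[OF wsi] by (simp add: ts_def)
    have wsS: "ws n \<in> domS" using wsi interior_subset by blast
    have e1: "ws n = (1 - t n) *\<^sub>R \<omega>1 + t n *\<^sub>R \<omega>2" by (simp add: ws_def algebra_simps)
    have "norm (ws n) \<le> norm ((1 - t n) *\<^sub>R \<omega>1) + norm (t n *\<^sub>R \<omega>2)" unfolding e1 by (rule norm_triangle_ineq)
    also have "\<dots> \<le> norm \<omega>1 + norm \<omega>2" using tp[of n]
      by (intro add_mono) (auto simp: mult_left_le_one_le)
    finally have nw: "norm (ws n) \<le> norm \<omega>1 + norm \<omega>2" .
    have "\<bar>a * norm (ws n)\<bar> \<le> \<bar>a\<bar> * (norm \<omega>1 + norm \<omega>2)" using nw by (simp add: abs_mult mult_left_mono)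
    then have c1: "- cAr (ws n) \<le> \<bar>a\<bar> * (norm \<omega>1 + norm \<omega>2) + c" using ac[OF wsS] by (simp add: abs_le_iff)
    have e2: "ts n \<bullet> (\<omega>2 - ws n) = (1 - t n) * (ts n \<bullet> (\<omega>2 - \<omega>1))" by (simp add: ws_def algebra_simps inner_diff_right)
    have "(1 - t n) * (b \<bullet> (\<omega>2 - \<omega>1)) \<le> (1 - t n) * (ts n \<bullet> (\<omega>2 - \<omega>1))" using ineq[of n] tp[of n] by (intro mult_left_mono) auto
    moreover have "- \<bar>b \<bullet> (\<omega>2 - \<omega>1)\<bar> \<le> (1 - t n) * (b \<bullet> (\<omega>2 - \<omega>1))"
    proof -
      have "\<bar>(1 - t n) * (b \<bullet> (\<omega>2 - \<omega>1))\<bar> \<le> \<bar>b \<bullet> (\<omega>2 - \<omega>1)\<bar>" using tp[of n] by (simp add: abs_mult mult_left_le_one_le)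
      then show ?thesis by (simp add: abs_le_iff)
    qed
    ultimately have c2: "- (ts n \<bullet> (\<omega>2 - ws n)) \<le> \<bar>b \<bullet> (\<omega>2 - \<omega>1)\<bar>" unfolding e2 by linarith
    have "\<delta> * norm (ts n) \<le> DIM('h) * (K - cAr (ws n) - ts n \<bullet> (\<omega>2 - ws n))" by (rule dK(2)[OF hm])
    also have "\<dots> \<le> DIM('h) * (K + \<bar>a\<bar> * (norm \<omega>1 + norm \<omega>2) + c + \<bar>b \<bullet> (\<omega>2 - \<omega>1)\<bar>)"
      using c1 c2 by (intro mult_left_mono) auto
    finally show ?thesis using dK(1) by (simp add: B_def field_simps)
  qed
  have "bounded (range ts)" using bnd by (auto simp: bounded_iff)
  then obtain \<theta>s r where r: "strict_mono r" "(ts \<circ> r) \<longlonglongrightarrow> \<theta>s"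
    using bounded_imp_convergent_subsequence by blast
  have l1: "(\<lambda>n. ts (r n)) \<longlonglongrightarrow> \<theta>s" using r(2) by (simp add: o_def)
  have l2: "(\<lambda>n. ws (r n)) \<longlonglongrightarrow> \<omega>1" using LIMSEQ_subseq_LIMSEQ[OF wl r(1)] by (simp add: o_def)
  have i1: "\<And>n. ts (r n) \<in> interior D" using th(1)[OF wsi] by (simp add: ts_def)
  have i2: "\<And>n. has_mean \<nu> \<Gamma> (ts (r n)) (ws (r n))" using th(2)[OF wsi] by (simp add: ts_def)
  have "\<theta>s \<in> interior D" "has_mean \<nu> \<Gamma> \<theta>s \<omega>1" by (rule LIM[OF i1 i2 l1 l2])+
  then have "\<omega>1 \<in> interior domS" by (rule mean_int)
  then show False using nint by simp
qed

lemma hmin_exists: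
  assumes C: "closed C" and w2: "\<omega>2 \<in> C" "\<omega>2 \<in> domS"
    and bd: "\<And>\<omega>. \<omega> \<in> C \<Longrightarrow> \<omega> \<in> domS \<Longrightarrow> cAr \<omega> - b \<bullet> \<omega> \<le> cAr \<omega>2 - b \<bullet> \<omega>2 \<Longrightarrow> norm \<omega> \<le> R"
  shows "\<exists>\<omega>1. \<omega>1 \<in> C \<and> \<omega>1 \<in> domS \<and> (\<forall>\<omega>. \<omega> \<in> C \<and> \<omega> \<in> domS \<longrightarrow> cAr \<omega>1 - b \<bullet> \<omega>1 \<le> cAr \<omega> - b \<bullet> \<omega>)"
proof -
  define h where "h \<omega> = cAr \<omega> - b \<bullet> \<omega>" for \<omega>
  define S where "S = {\<omega>. \<omega> \<in> C \<and> \<omega> \<in> domS \<and> h \<omega> \<le> h \<omega>2}"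
  obtain a c where ac: "\<And>\<omega>. \<omega> \<in> domS \<Longrightarrow> - a * norm \<omega> - c \<le> cAr \<omega>" using conj_lower by blast
  have SR: "norm \<omega> \<le> R" if "\<omega> \<in> S" for \<omega> using bd that by (auto simp: S_def h_def)
  have hl: "- \<bar>a\<bar> * R - c - norm b * R \<le> h \<omega>" if "\<omega> \<in> S" for \<omega>
  proof -
    have S: "\<omega> \<in> domS" "norm \<omega> \<le> R" using that SR by (auto simp: S_def)
    have "\<bar>a * norm \<omega>\<bar> \<le> \<bar>a\<bar> * R" using S(2) by (simp add: abs_mult mult_left_mono)
    then have 1: "- \<bar>a\<bar> * R - c \<le> cAr \<omega>" using ac[OF S(1)] by (simp add: abs_le_iff)
    have "b \<bullet> \<omega> \<le> norm b * norm \<omega>" by (rule norm_cauchy_schwarz)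
    also have "\<dots> \<le> norm b * R" using S(2) by (intro mult_left_mono) auto
    finally show ?thesis using 1 by (simp add: h_def)
  qed
  have Sne: "h ` S \<noteq> {}" using w2 by (auto simp: S_def)
  have Sbdd: "bdd_below (h ` S)" using hl by (auto simp: bdd_below_def)
  define m where "m = Inf (h ` S)"
  have mle: "m \<le> h \<omega>" if "\<omega> \<in> S" for \<omega> unfolding m_def using Sbdd that by (intro cInf_lower) auto
  have ex: "\<exists>\<omega>\<in>S. h \<omega> < m + 1 / (Suc n)" for n
  proof -
    have "Inf (h ` S) < m + 1 / Suc n" unfolding m_def by simp
    then show ?thesis using cInf_less_iff[OF Sne Sbdd] by auto
  qed
  have "\<exists>ws. \<forall>n. ws n \<in> S \<and> h (ws n) < m + 1 / (Suc n)" by (rule choice) (use ex in blast)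
  then obtain ws where ws0: "\<forall>n. ws n \<in> S \<and> h (ws n) < m + 1 / (Suc n)" by blast
  have wS: "ws n \<in> S" "h (ws n) < m + 1 / (Suc n)" for n using ws0 by auto
  have "bounded (range ws)" using SR wS(1) by (auto simp: bounded_iff)
  then obtain w0 r where r: "strict_mono r" "(ws \<circ> r) \<longlonglongrightarrow> w0"
    using bounded_imp_convergent_subsequence by blast
  have l: "(\<lambda>n. ws (r n)) \<longlonglongrightarrow> w0" using r(2) by (simp add: o_def)
  have "\<And>n. ws (r n) \<in> C" using wS(1) by (simp add: S_def)
  then have w0C: "w0 \<in> C" using closed_sequentially[OF C, of "\<lambda>n. ws (r n)" w0] l by blast
  have le: "\<theta> \<bullet> w0 - A \<theta> \<le> m + b \<bullet> w0" if th: "\<theta> \<in> D" for \<theta>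
  proof -
    have "\<theta> \<bullet> ws (r n) - A \<theta> \<le> m + 1 / Suc (r n) + b \<bullet> ws (r n)" for n
    proof -
      have "ws (r n) \<in> domS" using wS(1) by (simp add: S_def)
      then have "\<theta> \<bullet> ws (r n) - A \<theta> \<le> cAr (ws (r n))" using conj_ge_r th by blast
      then show ?thesis using wS(2)[of "r n"] by (simp add: h_def)
    qed
    moreover have "1 / real (Suc (r n)) \<le> 1 / real (Suc n)" for n
      using seq_suble[OF r(1), of n] by (simp add: frac_le)
    ultimately have u: "\<theta> \<bullet> ws (r n) - A \<theta> \<le> m + 1 / Suc n + b \<bullet> ws (r n)" for n
      by (smt (verit))
    have l0: "(\<lambda>n. 1 / real (Suc n)) \<longlonglongrightarrow> 0" using LIMSEQ_Suc[OF lim_inverse_n'] by simp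
    have "(\<lambda>n. (m + 1 / Suc n + b \<bullet> ws (r n)) - (\<theta> \<bullet> ws (r n) - A \<theta>)) \<longlonglongrightarrow> (m + 0 + b \<bullet> w0) - (\<theta> \<bullet> w0 - A \<theta>)"
      by (intro tendsto_intros l l0)
    moreover have "0 \<le> (m + 1 / Suc n + b \<bullet> ws (r n)) - (\<theta> \<bullet> ws (r n) - A \<theta>)" for n using u[of n] by simp
    ultimately have "0 \<le> (m + 0 + b \<bullet> w0) - (\<theta> \<bullet> w0 - A \<theta>)" by (intro LIMSEQ_le_const) auto
    then show ?thesis by simp
  qed
  note cl = conj_le[OF le]
  have hw0: "h w0 \<le> m" using cl(2) by (simp add: h_def)
  have "h w0 \<le> h \<omega>" if "\<omega> \<in> C" "\<omega> \<in> domS" for \<omega>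
  proof (cases "\<omega> \<in> S")
    case True then show ?thesis using mle hw0 by force
  next
    case False then have "h \<omega>2 < h \<omega>" using that by (auto simp: S_def)
    moreover have "\<omega>2 \<in> S" using w2 by (simp add: S_def)
    ultimately show ?thesis using mle[of \<omega>2] hw0 by linarith
  qed
  then show ?thesis using w0C cl(1) unfolding h_def by blast
qed

lemma hmin_unique:
  assumes C: "convex C" and w: "\<omega> \<in> C" "\<omega> \<in> interior domS" "\<omega>' \<in> C" "\<omega>' \<in> interior domS"
    and mn: "\<And>x. x \<in> C \<Longrightarrow> x \<in> domS \<Longrightarrow> cAr \<omega> - b \<bullet> \<omega> \<le> cAr x - b \<bullet> x"
    and mn': "\<And>x. x \<in> C \<Longrightarrow> x \<in> domS \<Longrightarrow> cAr \<omega>' - b \<bullet> \<omega>' \<le> cAr x - b \<bullet> x"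
  shows "\<omega> = \<omega>'"
proof (rule ccontr)
  assume ne: "\<omega> \<noteq> \<omega>'"
  define wm where "wm = (1/2) *\<^sub>R \<omega> + (1/2) *\<^sub>R \<omega>'"
  have wmC: "wm \<in> C" unfolding wm_def using convexD[OF C w(1) w(3), of "1/2" "1/2"] by simp
  have wmS: "wm \<in> domS" unfolding wm_def
    using convexD[OF domS_convex, of \<omega> \<omega>' "1/2" "1/2"] w interior_subset by auto
  have sc: "cAr wm < (1/2) * cAr \<omega> + (1/2) * cAr \<omega>'" unfolding wm_def by (rule strict_conv[OF w(2) w(4) ne])
  have "b \<bullet> wm = (1/2) * (b \<bullet> \<omega>) + (1/2) * (b \<bullet> \<omega>')" unfolding wm_def by (simp add: inner_add_right)
  then have "cAr wm - b \<bullet> wm < (1/2) * (cAr \<omega> - b \<bullet> \<omega>) + (1/2) * (cAr \<omega>' - b \<bullet> \<omega>')" using sc by (simp add: algebra_simps)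
  moreover have "cAr \<omega> - b \<bullet> \<omega> \<le> cAr wm - b \<bullet> wm" "cAr \<omega>' - b \<bullet> \<omega>' \<le> cAr wm - b \<bullet> wm"
    using mn[OF wmC wmS] mn'[OF wmC wmS] by auto
  moreover have k: "\<And>W X Y::real. W < 1/2 * X + 1/2 * Y \<Longrightarrow> X \<le> W \<Longrightarrow> Y \<le> W \<Longrightarrow> False" by linarith
  ultimately show False by blast
qed

end

context EF2 begin

lemma fD_mean:
  fixes \<Gamma>\<pi> :: "'x \<Rightarrow> 'k::euclidean_space" and L :: "'h \<Rightarrow> 'k"
  assumes lerc: "LERC \<nu> \<Gamma> \<Gamma>\<pi> \<theta>\<pi> L" and hm: "has_mean \<nu> \<Gamma> \<theta> \<omega>"
  shows "fD \<nu> \<Gamma> (expdens \<nu> \<Gamma>\<pi> \<theta>\<pi>) \<omega> = ereal (cAr \<omega> - adjoint L \<theta>\<pi> \<bullet> \<omega> + logpart \<nu> \<Gamma>\<pi> \<theta>\<pi>)"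
proof -
  define \<pi> where "\<pi> = expdens \<nu> \<Gamma>\<pi> \<theta>\<pi>"
  define Ap where "Ap = logpart \<nu> \<Gamma>\<pi> \<theta>\<pi>"
  have ex: "\<exists>\<theta>. has_mean \<nu> \<Gamma> \<theta> \<omega>" using hm by blast
  define \<theta>' where "\<theta>' = (SOME \<theta>. has_mean \<nu> \<Gamma> \<theta> \<omega>)"
  have hm': "has_mean \<nu> \<Gamma> \<theta>' \<omega>" unfolding \<theta>'_def by (rule someI_ex[OF ex])
  have qm: "qmean \<nu> \<Gamma> \<omega> = q \<theta>'" by (simp add: qmean_def \<theta>'_def)
  have tD: "\<theta>' \<in> D" using hm' by (simp add: has_mean_def)
  have iG: "integrable \<nu> (\<lambda>x. q \<theta>' x *\<^sub>R \<Gamma> x)" and mG: "(\<integral>x. q \<theta>' x *\<^sub>R \<Gamma> x \<partial>\<nu>) = \<omega>"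
    using hm' by (auto simp: has_mean_def)
  have lin: "linear L" using lerc by (simp add: LERC_def)
  have iP: "integrable \<nu> (\<lambda>x. q \<theta>' x *\<^sub>R \<Gamma>\<pi> x)" and mP: "(\<integral>x. q \<theta>' x *\<^sub>R \<Gamma>\<pi> x \<partial>\<nu>) = L \<omega>"
    using lerc hm' by (auto simp: LERC_def)
  have pt: "q \<theta>' x * ln (q \<theta>' x / \<pi> x) = \<theta>' \<bullet> (q \<theta>' x *\<^sub>R \<Gamma> x) - A \<theta>' * q \<theta>' x - \<theta>\<pi> \<bullet> (q \<theta>' x *\<^sub>R \<Gamma>\<pi> x) + Ap * q \<theta>' x" for x
  proof -
    have "ln (q \<theta>' x / \<pi> x) = (\<theta>' \<bullet> \<Gamma> x - A \<theta>') - (\<theta>\<pi> \<bullet> \<Gamma>\<pi> x - Ap)"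
      unfolding \<pi>_def Ap_def expdens_def by (simp add: ln_div)
    then have "q \<theta>' x * ln (q \<theta>' x / \<pi> x) = q \<theta>' x * ((\<theta>' \<bullet> \<Gamma> x - A \<theta>') - (\<theta>\<pi> \<bullet> \<Gamma>\<pi> x - Ap))" by simp
    also have "\<dots> = \<theta>' \<bullet> (q \<theta>' x *\<^sub>R \<Gamma> x) - A \<theta>' * q \<theta>' x - \<theta>\<pi> \<bullet> (q \<theta>' x *\<^sub>R \<Gamma>\<pi> x) + Ap * q \<theta>' x"
      by (simp add: algebra_simps)
    finally show ?thesis .
  qed
  have fe: "(\<lambda>x. q \<theta>' x * ln (q \<theta>' x / \<pi> x)) = (\<lambda>x. \<theta>' \<bullet> (q \<theta>' x *\<^sub>R \<Gamma> x) - A \<theta>' * q \<theta>' x - \<theta>\<pi> \<bullet> (q \<theta>' x *\<^sub>R \<Gamma>\<pi> x) + Ap * q \<theta>' x)"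
    using pt by auto
  have i1: "integrable \<nu> (\<lambda>x. \<theta>' \<bullet> (q \<theta>' x *\<^sub>R \<Gamma> x))" using iG by (intro integrable_inner_right)
  have i3: "integrable \<nu> (\<lambda>x. \<theta>\<pi> \<bullet> (q \<theta>' x *\<^sub>R \<Gamma>\<pi> x))" using iP by (intro integrable_inner_right)
  have i2: "integrable \<nu> (q \<theta>')" by (rule q_int(1)[OF tD])
  have int: "integrable \<nu> (\<lambda>x. q \<theta>' x * ln (q \<theta>' x / \<pi> x))" unfolding fe
    using i1 i2 i3 by (intro Bochner_Integration.integrable_add Bochner_Integration.integrable_diff
        Bochner_Integration.integrable_mult_right) auto
  have v1: "(\<integral>x. \<theta>' \<bullet> (q \<theta>' x *\<^sub>R \<Gamma> x) \<partial>\<nu>) = \<theta>' \<bullet> \<omega>" using iG mG by (subst integral_inner_right) auto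
  have v3: "(\<integral>x. \<theta>\<pi> \<bullet> (q \<theta>' x *\<^sub>R \<Gamma>\<pi> x) \<partial>\<nu>) = \<theta>\<pi> \<bullet> L \<omega>" using iP mP by (subst integral_inner_right) auto
  have v2: "(\<integral>x. q \<theta>' x \<partial>\<nu>) = 1" by (rule q_int(2)[OF tD])
  have val: "(\<integral>x. q \<theta>' x * ln (q \<theta>' x / \<pi> x) \<partial>\<nu>) = \<theta>' \<bullet> \<omega> - A \<theta>' - \<theta>\<pi> \<bullet> L \<omega> + Ap"
    unfolding fe using i1 i2 i3 v1 v2 v3 by (simp add: Bochner_Integration.integral_add Bochner_Integration.integral_diff)
  have adj: "\<theta>\<pi> \<bullet> L \<omega> = adjoint L \<theta>\<pi> \<bullet> \<omega>" using adjoint_works[OF lin, of \<omega> \<theta>\<pi>] by (simp add: inner_commute)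
  have c: "cAr \<omega> = \<theta>' \<bullet> \<omega> - A \<theta>'" by (rule conj_mean(2)[OF hm'])
  show ?thesis unfolding fD_def KL_def qm using ex int val adj c
    by (simp add: \<pi>_def Ap_def)
qed

end

context EF2 begin

lemma core:
  fixes \<Gamma>\<pi> :: "'x \<Rightarrow> 'k::euclidean_space" and L :: "'h \<Rightarrow> 'k"
  assumes lerc: "LERC \<nu> \<Gamma> \<Gamma>\<pi> \<theta>\<pi> L"
    and C: "closed C" "convex C" "C \<inter> interior domS \<noteq> {}"
    and bd: "\<And>\<omega>2. \<omega>2 \<in> C \<Longrightarrow> \<omega>2 \<in> domS \<Longrightarrow> \<exists>R. \<forall>\<omega>. \<omega> \<in> C \<longrightarrow> \<omega> \<in> domS \<longrightarrow>
                 cAr \<omega> - adjoint L \<theta>\<pi> \<bullet> \<omega> \<le> cAr \<omega>2 - adjoint L \<theta>\<pi> \<bullet> \<omega>2 \<longrightarrow> norm \<omega> \<le> R"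
  shows "\<exists>\<omega>s. unique_minimizer (fD \<nu> \<Gamma> (expdens \<nu> \<Gamma>\<pi> \<theta>\<pi>)) (C \<inter> domS) \<omega>s \<and>
              \<omega>s \<in> C \<inter> interior domS \<and>
              (\<forall>\<omega>. \<omega> \<in> C \<and> \<omega> \<in> domS \<longrightarrow> cAr \<omega>s - adjoint L \<theta>\<pi> \<bullet> \<omega>s \<le> cAr \<omega> - adjoint L \<theta>\<pi> \<bullet> \<omega>) \<and>
              (\<forall>\<omega>. \<omega> \<in> C \<and> \<omega> \<in> domS \<and> cAr \<omega> - adjoint L \<theta>\<pi> \<bullet> \<omega> \<le> cAr \<omega>s - adjoint L \<theta>\<pi> \<bullet> \<omega>s \<longrightarrow> \<omega> = \<omega>s)"
proof -
  define b where "b = adjoint L \<theta>\<pi>"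
  define h where "h \<omega> = cAr \<omega> - b \<bullet> \<omega>" for \<omega>
  define cc where "cc = logpart \<nu> \<Gamma>\<pi> \<theta>\<pi>"
  define f where "f = fD \<nu> \<Gamma> (expdens \<nu> \<Gamma>\<pi> \<theta>\<pi>)"
  have fm: "f \<omega> = ereal (h \<omega> + cc)" if "has_mean \<nu> \<Gamma> \<theta> \<omega>" for \<theta> \<omega>
    using fD_mean[OF lerc that] by (simp add: f_def h_def b_def cc_def)
  have fn: "f \<omega> = \<infinity>" if "\<not> (\<exists>\<theta>. has_mean \<nu> \<Gamma> \<theta> \<omega>)" for \<omega>
    using that by (simp add: f_def fD_def)
  obtain \<omega>2 where w2: "\<omega>2 \<in> C" "\<omega>2 \<in> interior domS" using C(3) by blast
  have w2S: "\<omega>2 \<in> domS" using w2 interior_subset by blast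
  obtain R where R: "\<And>\<omega>. \<omega> \<in> C \<Longrightarrow> \<omega> \<in> domS \<Longrightarrow> h \<omega> \<le> h \<omega>2 \<Longrightarrow> norm \<omega> \<le> R"
    using bd[OF w2(1) w2S] unfolding h_def b_def by blast
  obtain \<omega>1 where w1: "\<omega>1 \<in> C" "\<omega>1 \<in> domS" and mn: "\<And>\<omega>. \<omega> \<in> C \<Longrightarrow> \<omega> \<in> domS \<Longrightarrow> h \<omega>1 \<le> h \<omega>"
    using hmin_exists[OF C(1) w2(1) w2S, of b R] R unfolding h_def by blast
  have w1i: "\<omega>1 \<in> interior domS"
    by (rule hmin_interior[OF C(2) w1 w2, of b]) (use mn in \<open>auto simp: h_def\<close>)
  have uniq: "\<omega> = \<omega>1" if "\<omega> \<in> C" "\<omega> \<in> domS" "h \<omega> \<le> h \<omega>1" for \<omega>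
  proof -
    have mn2: "h \<omega> \<le> h x" if "x \<in> C" "x \<in> domS" for x using mn[OF that] \<open>h \<omega> \<le> h \<omega>1\<close> by linarith
    have wi: "\<omega> \<in> interior domS"
      by (rule hmin_interior[OF C(2) that(1,2) w2, of b]) (use mn2 in \<open>auto simp: h_def\<close>)
    show ?thesis by (rule hmin_unique[OF C(2) that(1) wi w1(1) w1i, of b]) (use mn mn2 in \<open>auto simp: h_def\<close>)
  qed
  have f1: "f \<omega>1 = ereal (h \<omega>1 + cc)" by (rule fm[OF th(2)[OF w1i]])
  have um: "unique_minimizer f (C \<inter> domS) \<omega>1"
    unfolding unique_minimizer_def
  proof (intro conjI ballI impI)
    show "\<omega>1 \<in> C \<inter> domS" using w1 by simp
  next
    fix \<omega> assume w: "\<omega> \<in> C \<inter> domS"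
    show "f \<omega>1 \<le> f \<omega>"
    proof (cases "\<exists>\<theta>. has_mean \<nu> \<Gamma> \<theta> \<omega>")
      case True then obtain \<theta> where "has_mean \<nu> \<Gamma> \<theta> \<omega>" by blast
      then show ?thesis using f1 fm mn[of \<omega>] w by auto
    next
      case False then show ?thesis using fn by simp
    qed
  next
    fix \<omega> assume w: "\<omega> \<in> C \<inter> domS" and all: "\<forall>\<omega>'\<in>C \<inter> domS. f \<omega> \<le> f \<omega>'"
    have "f \<omega> \<le> f \<omega>1" using all w1 by simp
    then have "\<exists>\<theta>. has_mean \<nu> \<Gamma> \<theta> \<omega>" using fn f1 by force
    then obtain \<theta> where "has_mean \<nu> \<Gamma> \<theta> \<omega>" by blast
    then have "h \<omega> \<le> h \<omega>1" using \<open>f \<omega> \<le> f \<omega>1\<close> f1 fm by auto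
    then show "\<omega> = \<omega>1" using uniq w by auto
  qed
  show ?thesis
    using um w1 w1i mn uniq unfolding f_def h_def b_def by blast
qed

end

context EF2 begin

lemma part1:
  fixes \<Gamma>\<pi> :: "'x \<Rightarrow> 'k::euclidean_space" and L :: "'h \<Rightarrow> 'k"
  assumes lerc: "LERC \<nu> \<Gamma> \<Gamma>\<pi> \<theta>\<pi> L"
    and C: "closed C" "convex C" "C \<inter> interior domS \<noteq> {}" "compact C"
  shows "\<exists>\<omega>s. unique_minimizer (fD \<nu> \<Gamma> (expdens \<nu> \<Gamma>\<pi> \<theta>\<pi>)) (C \<inter> domS) \<omega>s \<and> \<omega>s \<in> C \<inter> interior domS"
proof -
  obtain R where R: "\<And>\<omega>. \<omega> \<in> C \<Longrightarrow> norm \<omega> \<le> R" using compact_imp_bounded[OF C(4)] by (auto simp: bounded_iff)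
  show ?thesis using core[OF lerc C(1,2,3)] R by blast
qed

lemma part2:
  fixes \<Gamma>\<pi> :: "'x \<Rightarrow> 'k::euclidean_space" and L :: "'h \<Rightarrow> 'k"
  assumes lerc: "LERC \<nu> \<Gamma> \<Gamma>\<pi> \<theta>\<pi> L"
    and C: "closed C" "convex C" "C \<inter> interior domS \<noteq> {}" and bi: "adjoint L \<theta>\<pi> \<in> interior D"
  shows "\<exists>\<omega>s. unique_minimizer (fD \<nu> \<Gamma> (expdens \<nu> \<Gamma>\<pi> \<theta>\<pi>)) (C \<inter> domS) \<omega>s \<and> \<omega>s \<in> C \<inter> interior domS \<and>
           \<omega>s = proj_Astar \<nu> \<Gamma> C (gradient A (adjoint L \<theta>\<pi>))"
proof -
  define b where "b = adjoint L \<theta>\<pi>"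
  have bi': "b \<in> interior D" using bi by (simp add: b_def)
  obtain \<delta> K where dK: "\<delta> > 0" "\<And>\<omega>. \<omega> \<in> domS \<Longrightarrow> \<delta> * norm \<omega> \<le> DIM('h) * (K + cAr \<omega> - b \<bullet> \<omega>)"
    using coerc_b[OF bi'] by blast
  have bd: "\<exists>R. \<forall>\<omega>. \<omega> \<in> C \<longrightarrow> \<omega> \<in> domS \<longrightarrow>
                 cAr \<omega> - adjoint L \<theta>\<pi> \<bullet> \<omega> \<le> cAr \<omega>2 - adjoint L \<theta>\<pi> \<bullet> \<omega>2 \<longrightarrow> norm \<omega> \<le> R" for \<omega>2
  proof (intro exI allI impI)
    fix \<omega> assume w: "\<omega> \<in> domS" and le: "cAr \<omega> - adjoint L \<theta>\<pi> \<bullet> \<omega> \<le> cAr \<omega>2 - adjoint L \<theta>\<pi> \<bullet> \<omega>2"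
    have "\<delta> * norm \<omega> \<le> DIM('h) * (K + (cAr \<omega> - b \<bullet> \<omega>))" using dK(2)[OF w] by (simp add: add_diff_eq)
    also have "\<dots> \<le> DIM('h) * (K + (cAr \<omega>2 - b \<bullet> \<omega>2))" using le by (intro mult_left_mono) (auto simp: b_def)
    finally show "norm \<omega> \<le> DIM('h) * (K + (cAr \<omega>2 - b \<bullet> \<omega>2)) / \<delta>" using dK(1) by (simp add: field_simps)
  qed
  obtain \<omega>s where ws: "unique_minimizer (fD \<nu> \<Gamma> (expdens \<nu> \<Gamma>\<pi> \<theta>\<pi>)) (C \<inter> domS) \<omega>s" "\<omega>s \<in> C \<inter> interior domS"
    and mn: "\<And>\<omega>. \<omega> \<in> C \<and> \<omega> \<in> domS \<Longrightarrow> cAr \<omega>s - b \<bullet> \<omega>s \<le> cAr \<omega> - b \<bullet> \<omega>"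
    and uq: "\<And>\<omega>. \<omega> \<in> C \<and> \<omega> \<in> domS \<and> cAr \<omega> - b \<bullet> \<omega> \<le> cAr \<omega>s - b \<bullet> \<omega>s \<Longrightarrow> \<omega> = \<omega>s"
    using core[OF lerc C bd] unfolding b_def by blast
  define m0 where "m0 = (\<integral>x. q b x *\<^sub>R \<Gamma> x \<partial>\<nu>)"
  have hm0: "has_mean \<nu> \<Gamma> b m0" unfolding m0_def by (rule interior_mean[OF bi'])
  have g0: "gradient A b = m0" by (rule grad_A(2)[OF bi' hm0])
  have m0i: "m0 \<in> interior domS" by (rule mean_int[OF bi' hm0])
  have thm0: "th m0 = b" by (rule th_unique[OF hm0 m0i])
  have gc: "gradient cAr m0 = b" using cAr_deriv(2)[OF m0i] thm0 by simp
  have br: "bregman cAr x m0 = (cAr x - b \<bullet> x) - (cAr m0 - b \<bullet> m0)" for x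
    unfolding bregman_def gc by (simp add: inner_diff_right)
  have "proj_Astar \<nu> \<Gamma> C m0 = \<omega>s" unfolding proj_Astar_def
  proof (rule the_equality)
    show "\<omega>s \<in> C \<inter> domS \<and> (\<forall>\<omega>''\<in>C \<inter> domS. bregman cAr \<omega>s m0 \<le> bregman cAr \<omega>'' m0)"
      using ws(2) mn interior_subset unfolding br by auto
  next
    fix w assume "w \<in> C \<inter> domS \<and> (\<forall>\<omega>''\<in>C \<inter> domS. bregman cAr w m0 \<le> bregman cAr \<omega>'' m0)"
    then have w: "w \<in> C" "w \<in> domS" "bregman cAr w m0 \<le> bregman cAr \<omega>s m0" using ws(2) interior_subset by auto
    show "w = \<omega>s" using uq[of w] w unfolding br by auto
  qed
  then show ?thesis using ws g0 unfolding b_def by auto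
qed

lemma part3:
  fixes \<Gamma>\<pi> :: "'x \<Rightarrow> 'k::euclidean_space" and L :: "'h \<Rightarrow> 'k"
  assumes lerc: "LERC \<nu> \<Gamma> \<Gamma>\<pi> \<theta>\<pi> L"
  shows "rel_strongly_convex 1 (fD_r \<nu> \<Gamma> (expdens \<nu> \<Gamma>\<pi> \<theta>\<pi>)) cAr (interior domS) \<and>
         rel_smooth 1 (fD_r \<nu> \<Gamma> (expdens \<nu> \<Gamma>\<pi> \<theta>\<pi>)) cAr (interior domS)"
proof -
  define b where "b = adjoint L \<theta>\<pi>"
  define cc where "cc = logpart \<nu> \<Gamma>\<pi> \<theta>\<pi>"
  define f where "f = fD_r \<nu> \<Gamma> (expdens \<nu> \<Gamma>\<pi> \<theta>\<pi>)"
  have fe: "f \<omega> = cAr \<omega> - b \<bullet> \<omega> + cc" if "\<omega> \<in> interior domS" for \<omega>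
    using fD_mean[OF lerc th(2)[OF that]] by (simp add: f_def fD_r_def b_def cc_def)
  have fd: "(f has_derivative (\<lambda>v. (th \<omega> - b) \<bullet> v)) (at \<omega>)" if w: "\<omega> \<in> interior domS" for \<omega>
  proof -
    have "((\<lambda>x. cAr x - b \<bullet> x + cc) has_derivative (\<lambda>v. th \<omega> \<bullet> v - b \<bullet> v)) (at \<omega>)"
      by (intro has_derivative_add_const has_derivative_diff cAr_deriv(1)[OF w]
          bounded_linear_imp_has_derivative bounded_linear_inner_right)
    then have "(f has_derivative (\<lambda>v. th \<omega> \<bullet> v - b \<bullet> v)) (at \<omega>)"
      by (rule has_derivative_transform_within_open[OF _ open_interior w]) (simp add: fe)
    moreover have "(\<lambda>v. th \<omega> \<bullet> v - b \<bullet> v) = (\<lambda>v. (th \<omega> - b) \<bullet> v)" by (simp add: inner_diff_left fun_eq_iff)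
    ultimately show ?thesis by simp
  qed
  have diff: "f differentiable (at \<omega>) \<and> cAr differentiable (at \<omega>)" if "\<omega> \<in> interior domS" for \<omega>
    using fd[OF that] cAr_deriv(3)[OF that] unfolding differentiable_def by blast
  have eq: "bregman f \<omega> \<omega>' = bregman cAr \<omega> \<omega>'" if "\<omega> \<in> interior domS" "\<omega>' \<in> interior domS" for \<omega> \<omega>'
  proof -
    have "gradient f \<omega>' = th \<omega>' - b" by (rule gradient_eq[OF fd[OF that(2)]])
    moreover have "gradient cAr \<omega>' = th \<omega>'" by (rule cAr_deriv(2)[OF that(2)])
    ultimately show ?thesis unfolding bregman_def using fe[OF that(1)] fe[OF that(2)]
      by (simp add: inner_diff_left inner_diff_right)
  qed
  show ?thesis unfolding rel_strongly_convex_def rel_smooth_def f_def[symmetric]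
    using diff eq by auto
qed

end

theorem proposition6:
  fixes \<nu> :: "'x measure" and \<Gamma> :: "'x \<Rightarrow> 'h::euclidean_space"
    and \<Gamma>\<pi> :: "'x \<Rightarrow> 'k::euclidean_space" and \<theta>\<pi> :: 'k and L :: "'h \<Rightarrow> 'k"
  assumes nontrivial: "emeasure \<nu> (space \<nu>) \<noteq> 0"
    and meas: "\<Gamma> \<in> borel_measurable \<nu>" "\<Gamma>\<pi> \<in> borel_measurable \<nu>"
    and lerc: "LERC \<nu> \<Gamma> \<Gamma>\<pi> \<theta>\<pi> L"
  shows
    "(\<forall>C :: 'h set. interior (domA \<nu> \<Gamma>) \<noteq> {} \<and> minimal \<nu> \<Gamma> \<and> steep \<nu> \<Gamma> \<and>
        closed C \<and> convex C \<and> C \<inter> interior (domAstar \<nu> \<Gamma>) \<noteq> {} \<and> compact C \<longrightarrow>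
       (\<exists>\<omega>s. unique_minimizer (fD \<nu> \<Gamma> (expdens \<nu> \<Gamma>\<pi> \<theta>\<pi>)) (C \<inter> domAstar \<nu> \<Gamma>) \<omega>s \<and>
              \<omega>s \<in> C \<inter> interior (domAstar \<nu> \<Gamma>))) \<and>
    (\<forall>C :: 'h set. interior (domA \<nu> \<Gamma>) \<noteq> {} \<and> minimal \<nu> \<Gamma> \<and> steep \<nu> \<Gamma> \<and>
        closed C \<and> convex C \<and> C \<inter> interior (domAstar \<nu> \<Gamma>) \<noteq> {} \<and>
        adjoint L \<theta>\<pi> \<in> interior (domA \<nu> \<Gamma>) \<longrightarrow>
       (\<exists>\<omega>s. unique_minimizer (fD \<nu> \<Gamma> (expdens \<nu> \<Gamma>\<pi> \<theta>\<pi>)) (C \<inter> domAstar \<nu> \<Gamma>) \<omega>s \<and>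
              \<omega>s \<in> C \<inter> interior (domAstar \<nu> \<Gamma>) \<and>
              \<omega>s = proj_Astar \<nu> \<Gamma> C (gradient (logpart \<nu> \<Gamma>) (adjoint L \<theta>\<pi>)))) \<and>
    (interior (domA \<nu> \<Gamma>) \<noteq> {} \<and> minimal \<nu> \<Gamma> \<and> steep \<nu> \<Gamma> \<longrightarrow>
       rel_strongly_convex 1 (fD_r \<nu> \<Gamma> (expdens \<nu> \<Gamma>\<pi> \<theta>\<pi>)) (conjA_r \<nu> \<Gamma>) (interior (domAstar \<nu> \<Gamma>)) \<and>
       rel_smooth 1 (fD_r \<nu> \<Gamma> (expdens \<nu> \<Gamma>\<pi> \<theta>\<pi>)) (conjA_r \<nu> \<Gamma>) (interior (domAstar \<nu> \<Gamma>)))"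
proof -
  have E2: "EF2 \<nu> \<Gamma>" if "interior (domA \<nu> \<Gamma>) \<noteq> {}" "minimal \<nu> \<Gamma>" "steep \<nu> \<Gamma>"
    using that nontrivial meas(1) by (simp add: EF2_def EF_def EF2_axioms_def)
  show ?thesis
  proof (intro conjI allI impI)
    fix C :: "'h set"
    assume H: "interior (domA \<nu> \<Gamma>) \<noteq> {} \<and> minimal \<nu> \<Gamma> \<and> steep \<nu> \<Gamma> \<and>
        closed C \<and> convex C \<and> C \<inter> interior (domAstar \<nu> \<Gamma>) \<noteq> {} \<and> compact C"
    interpret E: EF2 \<nu> \<Gamma> using E2 H by blast
    show "\<exists>\<omega>s. unique_minimizer (fD \<nu> \<Gamma> (expdens \<nu> \<Gamma>\<pi> \<theta>\<pi>)) (C \<inter> domAstar \<nu> \<Gamma>) \<omega>s \<and>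
              \<omega>s \<in> C \<inter> interior (domAstar \<nu> \<Gamma>)"
      using E.part1[OF lerc] H by blast
  next
    fix C :: "'h set"
    assume H: "interior (domA \<nu> \<Gamma>) \<noteq> {} \<and> minimal \<nu> \<Gamma> \<and> steep \<nu> \<Gamma> \<and>
        closed C \<and> convex C \<and> C \<inter> interior (domAstar \<nu> \<Gamma>) \<noteq> {} \<and>
        adjoint L \<theta>\<pi> \<in> interior (domA \<nu> \<Gamma>)"
    interpret E: EF2 \<nu> \<Gamma> using E2 H by blast
    show "\<exists>\<omega>s. unique_minimizer (fD \<nu> \<Gamma> (expdens \<nu> \<Gamma>\<pi> \<theta>\<pi>)) (C \<inter> domAstar \<nu> \<Gamma>) \<omega>s \<and>
              \<omega>s \<in> C \<inter> interior (domAstar \<nu> \<Gamma>) \<and>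
              \<omega>s = proj_Astar \<nu> \<Gamma> C (gradient (logpart \<nu> \<Gamma>) (adjoint L \<theta>\<pi>))"
      using E.part2[OF lerc] H by blast
  next
    assume H: "interior (domA \<nu> \<Gamma>) \<noteq> {} \<and> minimal \<nu> \<Gamma> \<and> steep \<nu> \<Gamma>"
    interpret E: EF2 \<nu> \<Gamma> using E2 H by blast
    show "rel_strongly_convex 1 (fD_r \<nu> \<Gamma> (expdens \<nu> \<Gamma>\<pi> \<theta>\<pi>)) (conjA_r \<nu> \<Gamma>) (interior (domAstar \<nu> \<Gamma>))"
      using E.part3[OF lerc] by blast
    show "rel_smooth 1 (fD_r \<nu> \<Gamma> (expdens \<nu> \<Gamma>\<pi> \<theta>\<pi>)) (conjA_r \<nu> \<Gamma>) (interior (domAstar \<nu> \<Gamma>))"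
      using E.part3[OF lerc] by blast
  qed
qed

end
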